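(* Let $S=\mathcal{M}[G;I,\Lambda;P]$ be a Rees matrix semigroup where $G$ is a finitely generated group, $I=\{i_1,\ldots,i_n\}$ and $\Lambda=\{\lambda_1,\ldots,\lambda_m\}$ are finite, and $P=(p_{\lambda,i})_{\lambda\in\Lambda,i\in I}$ is an $m\times n$ matrix with entries in $G$. Then the right ends of $S$ (the poset $\Omega S$) form an anti-chain of cardinality $n\cdot|\Omega G|$, and the left ends of $S$ form an anti-chain of cardinality $m\cdot|\Omega G|$.
   Context: The Rees matrix semigroup $\mathcal{M}[G;I,\Lambda;P]$ is the set $I\times G\times\Lambda$ with multiplication $(i,g,\lambda)(j,h,\mu)=(i,g\,p_{\lambda,j}\,h,\mu)$. A digraph on $\Omega$ is a subset $\Gamma\subseteq\Omega\times\Omega$. A path is a sequence of pairwise distinct vertices $(v_0,v_1,\ldots)$ with $(v_i,v_{i+1})\in\Gamma$ (length 0 allowed); a ray is an infinite path; an anti-ray is an infinite sequence of distinct vertices with $(v_{i+1},v_i)\in\Gamma$. For infinite $\Sigma',\Sigma\subseteq\Omega$, $\Sigma'\preccurlyeq\Sigma$ means there are infinitely many pairwise vertex-disjoint paths from vertices of $\Sigma'$ to vertices of $\Sigma$. On rays and anti-rays $\preccurlyeq$ is a preorder with associated equivalence $\approx$; the ends are the $\approx$-classes of rays and anti-rays, and $\Omega\Gamma$ is the poset of ends. The right Cayley graph $\Gamma_r(S,A)$ has vertex set $S$ and edges $(x,xa)$; the left Cayley graph $\Gamma_l(S,A)$ has edges $(x,ax)$, for $x\in S$, $a\in A$. For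 a finitely generated semigroup $S$, the right ends $\Omega S$ are $\Omega\Gamma_r(S,A)$ and the left ends are $\Omega\Gamma_l(S,A)$ for any finite generating set $A$ (well defined up to isomorphism). For the group $G$, $\Omega G$ denotes its right ends as a semigroup. An anti-chain is a poset in which no two distinct elements are comparable. *)

theory Defs
  imports "HOL-Algebra.Generated_Groups" "HOL-Library.Equipollence"
begin

definition is_path :: "'v rel \<Rightarrow> 'v list \<Rightarrow> bool" where
  "is_path \<Gamma> p \<longleftrightarrow> p \<noteq> [] \<and> distinct p \<and> successively (\<lambda>x y. (x, y) \<in> \<Gamma>) p"

definition is_ray :: "'v rel \<Rightarrow> (nat \<Rightarrow> 'v) \<Rightarrow> bool" where
  "is_ray \<Gamma> f \<longleftrightarrow> inj f \<and> (\<forall>i. (f i, f (Suc i)) \<in> \<Gamma>)"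

definition is_antiray :: "'v rel \<Rightarrow> (nat \<Rightarrow> 'v) \<Rightarrow> bool" where
  "is_antiray \<Gamma> f \<longleftrightarrow> inj f \<and> (\<forall>i. (f (Suc i), f i) \<in> \<Gamma>)"

definition end_prec :: "'v rel \<Rightarrow> 'v set \<Rightarrow> 'v set \<Rightarrow> bool" where
  "end_prec \<Gamma> X Y \<longleftrightarrow>
     (\<exists>ps :: nat \<Rightarrow> 'v list.
        (\<forall>k. is_path \<Gamma> (ps k) \<and> hd (ps k) \<in> X \<and> last (ps k) \<in> Y) \<and>
        (\<forall>k l. k \<noteq> l \<longrightarrow> set (ps k) \<inter> set (ps l) = {}))"

definition rays_antirays :: "'v rel \<Rightarrow> (nat \<Rightarrow> 'v) set" where
  "rays_antirays \<Gamma> = {f. is_ray \<Gamma> f \<or> is_antiray \<Gamma> f}"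

definition end_equiv :: "'v rel \<Rightarrow> ((nat \<Rightarrow> 'v) \<times> (nat \<Rightarrow> 'v)) set" where
  "end_equiv \<Gamma> = {(r, s). r \<in> rays_antirays \<Gamma> \<and> s \<in> rays_antirays \<Gamma> \<and>
      end_prec \<Gamma> (range r) (range s) \<and> end_prec \<Gamma> (range s) (range r)}"

definition ends :: "'v rel \<Rightarrow> (nat \<Rightarrow> 'v) set set" where
  "ends \<Gamma> = rays_antirays \<Gamma> // end_equiv \<Gamma>"

definition end_le :: "'v rel \<Rightarrow> (nat \<Rightarrow> 'v) set \<Rightarrow> (nat \<Rightarrow> 'v) set \<Rightarrow> bool" where
  "end_le \<Gamma> E F \<longleftrightarrow> (\<exists>r\<in>E. \<exists>s\<in>F. end_prec \<Gamma> (range r) (range s))"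

definition ends_antichain :: "'v rel \<Rightarrow> bool" where
  "ends_antichain \<Gamma> \<longleftrightarrow>
     (\<forall>E\<in>ends \<Gamma>. \<forall>F\<in>ends \<Gamma>. E \<noteq> F \<longrightarrow> \<not> end_le \<Gamma> E F \<and> \<not> end_le \<Gamma> F E)"

inductive_set sg_generated :: "('a \<Rightarrow> 'a \<Rightarrow> 'a) \<Rightarrow> 'a set \<Rightarrow> 'a set"
  for mul :: "'a \<Rightarrow> 'a \<Rightarrow> 'a" and A :: "'a set" where
  gen: "a \<in> A \<Longrightarrow> a \<in> sg_generated mul A"
| mul_closed: "x \<in> sg_generated mul A \<Longrightarrow> y \<in> sg_generated mul A \<Longrightarrow> mul x y \<in> sg_generated mul A"

definition sg_generates :: "'a set \<Rightarrow> ('a \<Rightarrow> 'a \<Rightarrow> 'a) \<Rightarrow> 'a set \<Rightarrow> bool" where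
  "sg_generates S mul A \<longleftrightarrow> A \<subseteq> S \<and> sg_generated mul A = S"

definition right_cayley :: "'a set \<Rightarrow> ('a \<Rightarrow> 'a \<Rightarrow> 'a) \<Rightarrow> 'a set \<Rightarrow> 'a rel" where
  "right_cayley S mul A = {(x, mul x a) | x a. x \<in> S \<and> a \<in> A}"

definition left_cayley :: "'a set \<Rightarrow> ('a \<Rightarrow> 'a \<Rightarrow> 'a) \<Rightarrow> 'a set \<Rightarrow> 'a rel" where
  "left_cayley S mul A = {(x, mul a x) | x a. x \<in> S \<and> a \<in> A}"

definition rees_carrier :: "('g, 'b) monoid_scheme \<Rightarrow> 'i set \<Rightarrow> 'l set \<Rightarrow> ('i \<times> 'g \<times> 'l) set" where
  "rees_carrier G I L = I \<times> carrier G \<times> L"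

definition rees_mult :: "('g, 'b) monoid_scheme \<Rightarrow> ('l \<Rightarrow> 'i \<Rightarrow> 'g)
    \<Rightarrow> 'i \<times> 'g \<times> 'l \<Rightarrow> 'i \<times> 'g \<times> 'l \<Rightarrow> 'i \<times> 'g \<times> 'l" where
  "rees_mult G P x y = (case x of (i, g, l) \<Rightarrow> case y of (j, h, m) \<Rightarrow>
       (i, g \<otimes>\<^bsub>G\<^esub> P l j \<otimes>\<^bsub>G\<^esub> h, m))"

end

theory Submission
  imports Defs
begin



definition avoid :: "'v rel \<Rightarrow> 'v set \<Rightarrow> 'v rel" where
  "avoid \<Gamma> F = \<Gamma> \<inter> ((- F) \<times> (- F))"

definition reachF :: "'v rel \<Rightarrow> 'v set \<Rightarrow> 'v \<Rightarrow> 'v \<Rightarrow> bool" where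
  "reachF \<Gamma> F u v \<longleftrightarrow> u \<notin> F \<and> (u, v) \<in> (avoid \<Gamma> F)\<^sup>*"

definition prec :: "'v rel \<Rightarrow> 'v set \<Rightarrow> 'v set \<Rightarrow> bool" where
  "prec \<Gamma> X Y \<longleftrightarrow> (\<forall>F. finite F \<longrightarrow> (\<exists>x\<in>X. \<exists>y\<in>Y. reachF \<Gamma> F x y))"

lemma path_rtrancl_avoid:
  "p \<noteq> [] \<Longrightarrow> successively (\<lambda>x y. (x, y) \<in> \<Gamma>) p \<Longrightarrow> set p \<inter> F = {}
   \<Longrightarrow> (hd p, last p) \<in> (avoid \<Gamma> F)\<^sup>*"
proof (induction p)
  case Nil then show ?case by simp
next
  case (Cons x xs)
  show ?case
  proof (cases xs)
    case Nil then show ?thesis by simp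
  next
    case (Cons y ys)
    then have "(hd xs, last xs) \<in> (avoid \<Gamma> F)\<^sup>*" using Cons.prems Cons.IH by auto
    moreover have "(x, y) \<in> avoid \<Gamma> F" using Cons.prems Cons by (auto simp: avoid_def)
    moreover have "hd xs = y" using Cons by simp
    moreover have "last (x # xs) = last xs" using Cons by simp
    ultimately show ?thesis by (simp add: converse_rtrancl_into_rtrancl)
  qed
qed

lemma rtrancl_path:
  assumes "(x, y) \<in> R\<^sup>*"
  shows "\<exists>p. p \<noteq> [] \<and> distinct p \<and> successively (\<lambda>a b. (a, b) \<in> R) p \<and> hd p = x \<and> last p = y
            \<and> set p \<subseteq> insert x (Range R)"
  using assms
proof (induction rule: rtrancl_induct)
  case base
  then show ?case by (intro exI[of _ "[x]"]) auto
next
  case (step y z)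
  then obtain p where p: "p \<noteq> []" "distinct p" "successively (\<lambda>a b. (a, b) \<in> R) p" "hd p = x" "last p = y"
     "set p \<subseteq> insert x (Range R)" by blast
  show ?case
  proof (cases "z \<in> set p")
    case True
    then obtain ys zs where pz: "p = ys @ z # zs" by (meson split_list)
    have "successively (\<lambda>a b. (a, b) \<in> R) (ys @ [z])"
      using p(3) unfolding pz by (auto simp: successively_append_iff)
    moreover have "hd (ys @ [z]) = x" using p(4) pz by (cases ys) auto
    ultimately show ?thesis using p pz by (intro exI[of _ "ys @ [z]"]) auto
  next
    case False
    have "successively (\<lambda>a b. (a, b) \<in> R) (p @ [z])"
      using p(3) p(1) p(5) step(2) by (auto simp: successively_append_iff)
    then show ?thesis using p False step(2) by (intro exI[of _ "p @ [z]"]) auto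
  qed
qed

lemma reachF_path:
  assumes "reachF \<Gamma> F x y"
  shows "\<exists>p. is_path \<Gamma> p \<and> hd p = x \<and> last p = y \<and> set p \<inter> F = {}"
proof -
  from assms have xF: "x \<notin> F" and r: "(x, y) \<in> (avoid \<Gamma> F)\<^sup>*" by (auto simp: reachF_def)
  from rtrancl_path[OF r] obtain p where p: "p \<noteq> []" "distinct p"
    "successively (\<lambda>a b. (a, b) \<in> avoid \<Gamma> F) p" "hd p = x" "last p = y"
    "set p \<subseteq> insert x (Range (avoid \<Gamma> F))" by blast
  have "successively (\<lambda>a b. (a, b) \<in> \<Gamma>) p"
    using p(3) by (rule successively_mono) (auto simp: avoid_def)
  moreover have "set p \<inter> F = {}" using p(6) xF by (auto simp: avoid_def)
  ultimately show ?thesis using p by (auto simp: is_path_def)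
qed

lemma end_prec_iff_prec:
  fixes \<Gamma> :: "'v rel"
  shows "end_prec \<Gamma> X Y \<longleftrightarrow> prec \<Gamma> X Y"
proof
  assume "end_prec \<Gamma> X Y"
  then have "\<exists>ps :: nat \<Rightarrow> 'v list. (\<forall>k. is_path \<Gamma> (ps k) \<and> hd (ps k) \<in> X \<and> last (ps k) \<in> Y) \<and>
        (\<forall>k l. k \<noteq> l \<longrightarrow> set (ps k) \<inter> set (ps l) = {})" by (simp only: end_prec_def)
  then obtain ps :: "nat \<Rightarrow> 'v list" where H: "(\<forall>k. is_path \<Gamma> (ps k) \<and> hd (ps k) \<in> X \<and> last (ps k) \<in> Y) \<and>
        (\<forall>k l. k \<noteq> l \<longrightarrow> set (ps k) \<inter> set (ps l) = {})" ..
  have ps: "\<And>k. is_path \<Gamma> (ps k) \<and> hd (ps k) \<in> X \<and> last (ps k) \<in> Y" using H by blast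
  have dj: "\<And>k l. k \<noteq> l \<Longrightarrow> set (ps k) \<inter> set (ps l) = {}" using H by blast
  show "prec \<Gamma> X Y" unfolding prec_def
  proof (intro allI impI)
    fix F :: "'v set" assume fin: "finite F"
    have sub: "{k. set (ps k) \<inter> F \<noteq> {}} \<subseteq> (\<Union>f\<in>F. {k. f \<in> set (ps k)})" by auto
    have "finite {k. f \<in> set (ps k)}" for f
    proof -
      have "{k. f \<in> set (ps k)} \<subseteq> {SOME k. f \<in> set (ps k)}"
      proof
        fix k assume "k \<in> {k. f \<in> set (ps k)}"
        then have k: "f \<in> set (ps k)" by simp
        then have "f \<in> set (ps (SOME k. f \<in> set (ps k)))" by (rule someI)
        then show "k \<in> {SOME k. f \<in> set (ps k)}" using dj k by blast
      qed
      then show ?thesis using finite_subset by blast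
    qed
    then have "finite {k. set (ps k) \<inter> F \<noteq> {}}" using sub fin by (meson finite_UN_I finite_subset)
    from ex_new_if_finite[OF infinite_UNIV_nat this] obtain k where k: "set (ps k) \<inter> F = {}"
      by blast
    have "(hd (ps k), last (ps k)) \<in> (avoid \<Gamma> F)\<^sup>*"
      using ps[of k] k by (intro path_rtrancl_avoid) (auto simp: is_path_def)
    moreover have "hd (ps k) \<notin> F" using ps[of k] k using hd_in_set by (fastforce simp: is_path_def)
    ultimately show "\<exists>x\<in>X. \<exists>y\<in>Y. reachF \<Gamma> F x y" using ps[of k] by (auto simp: reachF_def)
  qed
next
  assume pr: "prec \<Gamma> X Y"
  define step where "step U = (SOME p. is_path \<Gamma> p \<and> hd p \<in> X \<and> last p \<in> Y \<and> set p \<inter> U = {})" for U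
  have step: "is_path \<Gamma> (step U) \<and> hd (step U) \<in> X \<and> last (step U) \<in> Y \<and> set (step U) \<inter> U = {}"
    if "finite U" for U
  proof -
    from pr that obtain x y where "x \<in> X" "y \<in> Y" "reachF \<Gamma> U x y" unfolding prec_def by blast
    then have "\<exists>p. is_path \<Gamma> p \<and> hd p \<in> X \<and> last p \<in> Y \<and> set p \<inter> U = {}"
      using reachF_path by fastforce
    then show ?thesis unfolding step_def by (rule someI_ex)
  qed
  define U where "U = rec_nat {} (\<lambda>k V. V \<union> set (step V))"
  have U0: "U 0 = {}" and US: "U (Suc k) = U k \<union> set (step (U k))" for k by (simp_all add: U_def)
  have finU: "finite (U k)" for k by (induction k) (simp_all add: U0 US)
  have mono: "k \<le> l \<Longrightarrow> U k \<subseteq> U l" for k l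
    by (induction l rule: dec_induct) (auto simp: US)
  define ps where "ps k = step (U k)" for k
  have A: "\<forall>k. is_path \<Gamma> (ps k) \<and> hd (ps k) \<in> X \<and> last (ps k) \<in> Y"
    using step[OF finU] by (simp add: ps_def)
  have *: "set (ps a) \<inter> set (ps b) = {}" if "a < b" for a b
  proof -
    have "set (ps a) \<subseteq> U b" using mono[of "Suc a" b] that by (auto simp: US ps_def)
    moreover have "set (ps b) \<inter> U b = {}" using step[OF finU[of b]] by (simp add: ps_def)
    ultimately show ?thesis by blast
  qed
  have B: "\<forall>k l. k \<noteq> l \<longrightarrow> set (ps k) \<inter> set (ps l) = {}"
  proof (intro allI impI)
    fix k l :: nat assume "k \<noteq> l"
    then show "set (ps k) \<inter> set (ps l) = {}"
      using *[of k l] *[of l k] by (cases "k < l") auto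
  qed
  show "end_prec \<Gamma> X Y" unfolding end_prec_def using A B by blast
qed




definition near :: "'v rel \<Rightarrow> nat \<Rightarrow> 'v \<Rightarrow> 'v \<Rightarrow> bool" where
  "near \<Gamma> C u v \<longleftrightarrow> (\<exists>n\<le>C. (u, v) \<in> \<Gamma> ^^ n)"

definition bball :: "'v rel \<Rightarrow> nat \<Rightarrow> 'v set \<Rightarrow> 'v set" where
  "bball \<Gamma> C F = {u. \<exists>f\<in>F. near \<Gamma> C u f}"

definition nice :: "'v rel \<Rightarrow> nat \<Rightarrow> bool" where
  "nice \<Gamma> K \<longleftrightarrow> (\<forall>u. finite (\<Gamma> `` {u})) \<and> (\<forall>u. finite (\<Gamma>\<inverse> `` {u})) \<and>
     (\<forall>u v. (u, v) \<in> \<Gamma> \<longrightarrow> near \<Gamma> K v u)"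

definition tailc :: "'v rel \<Rightarrow> 'v set \<Rightarrow> bool" where
  "tailc \<Gamma> Y \<longleftrightarrow> (\<forall>F. finite F \<longrightarrow> (\<exists>F'. finite F' \<and> (\<forall>y1\<in>Y-F'. \<forall>y2\<in>Y-F'. reachF \<Gamma> F y1 y2)))"

lemma near_refl: "near \<Gamma> C u u"
  unfolding near_def by (intro exI[of _ 0]) auto

lemma near_edge: "(u, v) \<in> \<Gamma> \<Longrightarrow> 1 \<le> C \<Longrightarrow> near \<Gamma> C u v"
  unfolding near_def by (intro exI[of _ 1]) auto

lemma near_trans: "near \<Gamma> C u v \<Longrightarrow> near \<Gamma> D v w \<Longrightarrow> near \<Gamma> (C + D) u w"
proof -
  assume "near \<Gamma> C u v" "near \<Gamma> D v w"
  then obtain m n where "m \<le> C" "(u, v) \<in> \<Gamma> ^^ m" "n \<le> D" "(v, w) \<in> \<Gamma> ^^ n"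
    unfolding near_def by blast
  then show ?thesis unfolding near_def by (intro exI[of _ "m + n"]) (auto intro: relpow_trans)
qed

lemma near_mono: "C \<le> D \<Longrightarrow> near \<Gamma> C u v \<Longrightarrow> near \<Gamma> D u v"
  unfolding near_def using le_trans by blast

lemma relpow_converse_iff: fixes \<Gamma> :: "'v rel" shows "(u, v) \<in> (\<Gamma>\<inverse>) ^^ n \<longleftrightarrow> (v, u) \<in> \<Gamma> ^^ n"
proof (induction n arbitrary: u v)
  case 0 then show ?case by (auto elim: relpow_0_E intro: relpow_0_I)
next
  case (Suc n)
  show ?case
  proof
    assume "(u, v) \<in> (\<Gamma>\<inverse>) ^^ Suc n"
    then obtain w where "(u, w) \<in> (\<Gamma>\<inverse>) ^^ n" "(w, v) \<in> \<Gamma>\<inverse>" by (rule relpow_Suc_E)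
    then have "(v, w) \<in> \<Gamma>" "(w, u) \<in> \<Gamma> ^^ n" using Suc.IH by auto
    then show "(v, u) \<in> \<Gamma> ^^ Suc n" by (rule relpow_Suc_I2)
  next
    assume "(v, u) \<in> \<Gamma> ^^ Suc n"
    then obtain w where "(v, w) \<in> \<Gamma>" "(w, u) \<in> \<Gamma> ^^ n" by (rule relpow_Suc_E2)
    then have "(u, w) \<in> (\<Gamma>\<inverse>) ^^ n" "(w, v) \<in> \<Gamma>\<inverse>" using Suc.IH by auto
    then show "(u, v) \<in> (\<Gamma>\<inverse>) ^^ Suc n" by (rule relpow_Suc_I)
  qed
qed

lemma near_converse: "near (\<Gamma>\<inverse>) C u v \<longleftrightarrow> near \<Gamma> C v u"
  unfolding near_def relpow_converse_iff ..

lemma finite_fball: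
  assumes "\<forall>u. finite (\<Gamma> `` {u})"
  shows "finite {v. near \<Gamma> C u v}"
proof (induction C)
  case 0
  have "{v. near \<Gamma> 0 u v} = {u}" unfolding near_def by auto
  then show ?case by simp
next
  case (Suc C)
  have "{v. near \<Gamma> (Suc C) u v} \<subseteq> {v. near \<Gamma> C u v} \<union> (\<Union>w\<in>{v. near \<Gamma> C u v}. \<Gamma> `` {w})"
  proof
    fix v assume "v \<in> {v. near \<Gamma> (Suc C) u v}"
    then obtain n where n: "n \<le> Suc C" "(u, v) \<in> \<Gamma> ^^ n" unfolding near_def by auto
    show "v \<in> {v. near \<Gamma> C u v} \<union> (\<Union>w\<in>{v. near \<Gamma> C u v}. \<Gamma> `` {w})"
    proof (cases n)
      case 0 then show ?thesis using n near_refl[of \<Gamma> C u] by auto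
    next
      case (Suc m)
      with n obtain w where "(u, w) \<in> \<Gamma> ^^ m" "(w, v) \<in> \<Gamma>" by (auto elim: relpow_Suc_E)
      moreover have "m \<le> C" using n Suc by simp
      ultimately show ?thesis unfolding near_def by blast
    qed
  qed
  moreover have "finite ({v. near \<Gamma> C u v} \<union> (\<Union>w\<in>{v. near \<Gamma> C u v}. \<Gamma> `` {w}))"
    using Suc assms by auto
  ultimately show ?case by (rule finite_subset)
qed

lemma finite_bball:
  assumes "\<forall>u. finite (\<Gamma>\<inverse> `` {u})" "finite F"
  shows "finite (bball \<Gamma> C F)"
proof -
  have "bball \<Gamma> C F = (\<Union>f\<in>F. {u. near (\<Gamma>\<inverse>) C f u})"
    unfolding bball_def near_converse by auto
  then show ?thesis using finite_fball[OF assms(1)] assms(2) by auto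
qed

lemma bball_sup: "F \<subseteq> bball \<Gamma> C F"
  unfolding bball_def using near_refl by fast

lemma reachF_refl: "u \<notin> F \<Longrightarrow> reachF \<Gamma> F u u"
  by (simp add: reachF_def)

lemma reachF_trans: "reachF \<Gamma> F u v \<Longrightarrow> reachF \<Gamma> F v w \<Longrightarrow> reachF \<Gamma> F u w"
  unfolding reachF_def by auto

lemma reachF_mono: "F \<subseteq> F' \<Longrightarrow> reachF \<Gamma> F' u v \<Longrightarrow> reachF \<Gamma> F u v"
proof -
  assume "F \<subseteq> F'" "reachF \<Gamma> F' u v"
  moreover have "avoid \<Gamma> F' \<subseteq> avoid \<Gamma> F" using \<open>F \<subseteq> F'\<close> by (auto simp: avoid_def)
  ultimately show ?thesis unfolding reachF_def using rtrancl_mono by blast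
qed

lemma reachF_end: "reachF \<Gamma> F u v \<Longrightarrow> v \<notin> F"
  unfolding reachF_def
proof (elim conjE)
  assume u: "u \<notin> F" and r: "(u, v) \<in> (avoid \<Gamma> F)\<^sup>*"
  from r show "v \<notin> F"
  proof (cases rule: rtranclE)
    case base then show ?thesis using u by simp
  next
    case (step w) then show ?thesis by (auto simp: avoid_def)
  qed
qed

lemma reachF_edge: "(u, v) \<in> \<Gamma> \<Longrightarrow> u \<notin> F \<Longrightarrow> v \<notin> F \<Longrightarrow> reachF \<Gamma> F u v"
  unfolding reachF_def avoid_def by auto

lemma avoid_converse: "avoid (\<Gamma>\<inverse>) F = (avoid \<Gamma> F)\<inverse>"
  unfolding avoid_def by auto

lemma reachF_converse: "reachF (\<Gamma>\<inverse>) F u v \<longleftrightarrow> reachF \<Gamma> F v u"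
proof -
  have *: "reachF (\<Gamma>\<inverse>) F u v \<Longrightarrow> reachF \<Gamma> F v u" for \<Gamma> :: "'a rel" and u v
  proof -
    assume a: "reachF (\<Gamma>\<inverse>) F u v"
    have "v \<notin> F" using reachF_end[OF a] .
    moreover have "(v, u) \<in> (avoid \<Gamma> F)\<^sup>*"
      using a unfolding reachF_def avoid_converse rtrancl_converse by auto
    ultimately show ?thesis by (simp add: reachF_def)
  qed
  show ?thesis using *[of \<Gamma> u v] *[of "\<Gamma>\<inverse>" v u] by auto
qed

lemma relpow_avoid:
  "(u, v) \<in> \<Gamma> ^^ n \<Longrightarrow> (\<forall>m\<le>n. \<forall>w. (u, w) \<in> \<Gamma> ^^ m \<longrightarrow> w \<notin> F) \<Longrightarrow> (u, v) \<in> (avoid \<Gamma> F)\<^sup>*"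
proof (induction n arbitrary: v)
  case 0 then show ?case by simp
next
  case (Suc n)
  from Suc.prems(1) obtain w where w: "(u, w) \<in> \<Gamma> ^^ n" "(w, v) \<in> \<Gamma>" by (rule relpow_Suc_E)
  have "\<forall>m\<le>n. \<forall>w. (u, w) \<in> \<Gamma> ^^ m \<longrightarrow> w \<notin> F" using Suc.prems(2) le_SucI by blast
  then have "(u, w) \<in> (avoid \<Gamma> F)\<^sup>*" using Suc.IH[OF w(1)] by blast
  moreover have "w \<notin> F" using Suc.prems(2) w(1) le_SucI[OF order_refl[of n]] by blast
  moreover have "v \<notin> F" using Suc.prems(2) Suc.prems(1) order_refl[of "Suc n"] by blast
  ultimately show ?case using w(2) by (auto simp: avoid_def intro: rtrancl_into_rtrancl)
qed

lemma near_reachF: fixes \<Gamma> :: "'v rel" shows "near \<Gamma> C u v \<Longrightarrow> u \<notin> bball \<Gamma> C F \<Longrightarrow> reachF \<Gamma> F u v"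
proof -
  assume n: "near \<Gamma> C u v" and u: "u \<notin> bball \<Gamma> C F"
  then obtain k where k: "k \<le> C" "(u, v) \<in> \<Gamma> ^^ k" unfolding near_def by auto
  have "\<forall>m\<le>k. \<forall>w. (u, w) \<in> \<Gamma> ^^ m \<longrightarrow> w \<notin> F"
  proof (intro allI impI notI)
    fix m w assume "m \<le> k" "(u, w) \<in> \<Gamma> ^^ m" "w \<in> F"
    then have "near \<Gamma> C u w" using k unfolding near_def by (intro exI[of _ m]) simp
    then have "u \<in> bball \<Gamma> C F" using \<open>w \<in> F\<close> unfolding bball_def by blast
    then show False using u by contradiction
  qed
  note relpow_avoid[OF k(2) this]
  then have "(u, v) \<in> (avoid \<Gamma> F)\<^sup>*" .
  moreover have "u \<notin> F" using u bball_sup[of F \<Gamma> C] by blast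
  ultimately show ?thesis unfolding reachF_def by blast
qed

lemma prec_converse: "prec (\<Gamma>\<inverse>) X Y \<longleftrightarrow> prec \<Gamma> Y X"
  unfolding prec_def reachF_converse by fast

lemma rtrancl_reverse:
  assumes "nice \<Gamma> K" "(x, y) \<in> (avoid \<Gamma> (bball \<Gamma> K F))\<^sup>*"
  shows "(y, x) \<in> (avoid \<Gamma> F)\<^sup>*"
  using assms(2)
proof (induction rule: rtrancl_induct)
  case base then show ?case by simp
next
  case (step b c)
  then have "(b, c) \<in> \<Gamma>" "c \<notin> bball \<Gamma> K F" by (auto simp: avoid_def)
  moreover have "near \<Gamma> K c b" using assms(1) \<open>(b, c) \<in> \<Gamma>\<close> unfolding nice_def by blast
  ultimately have "reachF \<Gamma> F c b" using near_reachF by metis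
  then have "(c, b) \<in> (avoid \<Gamma> F)\<^sup>*" unfolding reachF_def by blast
  then show ?case using step.IH by (rule rtrancl_trans)
qed

lemma prec_sym:
  fixes \<Gamma> :: "'v rel"
  assumes "nice \<Gamma> K" "prec \<Gamma> X Y"
  shows "prec \<Gamma> Y X"
  unfolding prec_def
proof (intro allI impI)
  fix F :: "'v set" assume fin: "finite F"
  have "\<forall>u. finite (\<Gamma>\<inverse> `` {u})" using assms(1) unfolding nice_def by blast
  then have "finite (bball \<Gamma> K F)" using fin by (rule finite_bball)
  then have "\<exists>x\<in>X. \<exists>y\<in>Y. reachF \<Gamma> (bball \<Gamma> K F) x y"
    using assms(2) unfolding prec_def by blast
  then obtain x y where xy: "x \<in> X" "y \<in> Y" "reachF \<Gamma> (bball \<Gamma> K F) x y" by blast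
  have "y \<notin> bball \<Gamma> K F" by (rule reachF_end[OF xy(3)])
  then have "y \<notin> F" using bball_sup[of F \<Gamma> K] by blast
  moreover have "(x, y) \<in> (avoid \<Gamma> (bball \<Gamma> K F))\<^sup>*" using xy(3) unfolding reachF_def by blast
  then have "(y, x) \<in> (avoid \<Gamma> F)\<^sup>*" by (rule rtrancl_reverse[OF assms(1)])
  ultimately have "reachF \<Gamma> F y x" unfolding reachF_def by blast
  then show "\<exists>y\<in>Y. \<exists>x\<in>X. reachF \<Gamma> F y x" using xy by blast
qed

lemma prec_trans:
  fixes \<Gamma> :: "'v rel"
  assumes "prec \<Gamma> X Y" "tailc \<Gamma> Y" "prec \<Gamma> Y Z"
  shows "prec \<Gamma> X Z"
  unfolding prec_def
proof (intro allI impI)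
  fix F :: "'v set" assume fin: "finite F"
  have "\<exists>F'. finite F' \<and> (\<forall>y1\<in>Y-F'. \<forall>y2\<in>Y-F'. reachF \<Gamma> F y1 y2)"
    using assms(2) fin unfolding tailc_def by blast
  then obtain F' where F': "finite F'" "\<forall>y1\<in>Y-F'. \<forall>y2\<in>Y-F'. reachF \<Gamma> F y1 y2" by blast
  have fin2: "finite (F \<union> F')" using fin F' by simp
  have "\<exists>x\<in>X. \<exists>y\<in>Y. reachF \<Gamma> (F \<union> F') x y" using assms(1) fin2 unfolding prec_def by blast
  then obtain x y1 where 1: "x \<in> X" "y1 \<in> Y" "reachF \<Gamma> (F \<union> F') x y1" by blast
  have "\<exists>x\<in>Y. \<exists>y\<in>Z. reachF \<Gamma> (F \<union> F') x y" using assms(3) fin2 unfolding prec_def by blast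
  then obtain y2 z where 2: "y2 \<in> Y" "z \<in> Z" "reachF \<Gamma> (F \<union> F') y2 z" by blast
  have "y1 \<notin> F \<union> F'" by (rule reachF_end[OF 1(3)])
  then have "y1 \<in> Y - F'" using 1(2) by blast
  moreover have "y2 \<notin> F \<union> F'" using 2(3) unfolding reachF_def by blast
  then have "y2 \<in> Y - F'" using 2(1) by blast
  ultimately have m: "reachF \<Gamma> F y1 y2" using F'(2) by blast
  have a: "reachF \<Gamma> F x y1" by (rule reachF_mono[OF _ 1(3)]) simp
  have b: "reachF \<Gamma> F y2 z" by (rule reachF_mono[OF _ 2(3)]) simp
  have "reachF \<Gamma> F x z" by (rule reachF_trans[OF reachF_trans[OF a m] b])
  then show "\<exists>x\<in>X. \<exists>z\<in>Z. reachF \<Gamma> F x z" using 1 2 by blast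
qed

lemma prec_refl: fixes \<Gamma> :: "'v rel" shows "infinite X \<Longrightarrow> prec \<Gamma> X X"
  unfolding prec_def
proof (intro allI impI)
  fix F :: "'v set" assume "infinite X" "finite F"
  then have "infinite (X - F)" using Diff_infinite_finite by blast
  then obtain x where "x \<in> X - F" using infinite_imp_nonempty by blast
  then have "x \<in> X" "x \<notin> F" by auto
  then have "reachF \<Gamma> F x x" using reachF_refl[of x F \<Gamma>] by blast
  then show "\<exists>x\<in>X. \<exists>y\<in>X. reachF \<Gamma> F x y" using \<open>x \<in> X\<close> by blast
qed




lemma seq_reach:
  fixes \<Gamma> :: "'v rel" and r :: "nat \<Rightarrow> 'v"
  assumes "\<forall>m\<ge>N. reachF \<Gamma> F (r m) (r (Suc m)) \<and> reachF \<Gamma> F (r (Suc m)) (r m)"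
    and "N \<le> a" "a \<le> b"
  shows "reachF \<Gamma> F (r a) (r b) \<and> reachF \<Gamma> F (r b) (r a)"
  using assms(3)
proof (induction b rule: dec_induct)
  case base
  have "reachF \<Gamma> F (r a) (r (Suc a))" using assms(1,2) by blast
  then have "r a \<notin> F" unfolding reachF_def by blast
  then have "reachF \<Gamma> F (r a) (r a)" by (rule reachF_refl)
  then show ?case by blast
next
  case (step b)
  have "reachF \<Gamma> F (r b) (r (Suc b)) \<and> reachF \<Gamma> F (r (Suc b)) (r b)"
    using assms(1,2) step(1) by (meson order_trans)
  then show ?case using step(3) reachF_trans by metis
qed

lemma edge_both:
  fixes \<Gamma> :: "'v rel"
  assumes "nice \<Gamma> K" "(u, v) \<in> \<Gamma>" "u \<notin> bball \<Gamma> K F" "v \<notin> bball \<Gamma> K F"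
  shows "reachF \<Gamma> F u v \<and> reachF \<Gamma> F v u"
proof
  have "u \<notin> F" "v \<notin> F" using assms(3,4) bball_sup[of F \<Gamma> K] by blast+
  then show "reachF \<Gamma> F u v" using reachF_edge[OF assms(2)] by blast
  have "near \<Gamma> K v u" using assms(1,2) unfolding nice_def by blast
  then show "reachF \<Gamma> F v u" using near_reachF assms(4) by metis
qed

lemma tailc_ra:
  fixes \<Gamma> :: "'v rel"
  assumes "nice \<Gamma> K" "r \<in> rays_antirays \<Gamma>"
  shows "tailc \<Gamma> (range r)"
  unfolding tailc_def
proof (intro allI impI)
  fix F :: "'v set" assume fin: "finite F"
  have "\<forall>u. finite (\<Gamma>\<inverse> `` {u})" using assms(1) unfolding nice_def by blast
  then have finB: "finite (bball \<Gamma> K F)" using fin by (rule finite_bball)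
  have inj: "inj r" using assms(2) unfolding rays_antirays_def is_ray_def is_antiray_def by blast
  have "finite (r -` bball \<Gamma> K F)" using finite_vimageI[OF finB inj] .
  then obtain N where N: "\<forall>n\<in>r -` bball \<Gamma> K F. n < N"
    by (meson finite_nat_set_iff_bounded)
  have NB: "\<And>n. N \<le> n \<Longrightarrow> r n \<notin> bball \<Gamma> K F" using N by (meson leD vimageI)
  have both: "\<forall>m\<ge>N. reachF \<Gamma> F (r m) (r (Suc m)) \<and> reachF \<Gamma> F (r (Suc m)) (r m)"
  proof (intro allI impI)
    fix m assume m: "N \<le> m"
    have a: "r m \<notin> bball \<Gamma> K F" "r (Suc m) \<notin> bball \<Gamma> K F" using NB m by auto
    from assms(2) have "(r m, r (Suc m)) \<in> \<Gamma> \<or> (r (Suc m), r m) \<in> \<Gamma>"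
      unfolding rays_antirays_def is_ray_def is_antiray_def by blast
    then show "reachF \<Gamma> F (r m) (r (Suc m)) \<and> reachF \<Gamma> F (r (Suc m)) (r m)"
    proof
      assume "(r m, r (Suc m)) \<in> \<Gamma>"
      then show ?thesis using edge_both[OF assms(1) _ a(1) a(2)] by blast
    next
      assume "(r (Suc m), r m) \<in> \<Gamma>"
      then show ?thesis using edge_both[OF assms(1) _ a(2) a(1)] by blast
    qed
  qed
  show "\<exists>F'. finite F' \<and> (\<forall>y1\<in>range r - F'. \<forall>y2\<in>range r - F'. reachF \<Gamma> F y1 y2)"
  proof (intro exI[of _ "r ` {..<N}"] conjI ballI)
    show "finite (r ` {..<N})" by simp
  next
    fix y1 y2 assume y: "y1 \<in> range r - r ` {..<N}" "y2 \<in> range r - r ` {..<N}"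
    then obtain a b where ab: "y1 = r a" "y2 = r b" "N \<le> a" "N \<le> b"
      by (metis DiffE imageI lessThan_iff not_le rangeE)
    show "reachF \<Gamma> F y1 y2"
    proof (cases "a \<le> b")
      case True then show ?thesis using seq_reach[OF both ab(3) True] ab by blast
    next
      case False then show ?thesis using seq_reach[OF both ab(4), of a] ab by simp
    qed
  qed
qed

definition coarse :: "'a set \<Rightarrow> 'a rel \<Rightarrow> 'b rel \<Rightarrow> nat \<Rightarrow> ('a \<Rightarrow> 'b) \<Rightarrow> bool" where
  "coarse V1 \<Gamma>1 \<Gamma>2 C \<phi> \<longleftrightarrow> \<Gamma>1 \<subseteq> V1 \<times> V1 \<and> (\<forall>u. finite (\<Gamma>2\<inverse> `` {u})) \<and>
     (\<forall>u v. (u, v) \<in> \<Gamma>1 \<longrightarrow> near \<Gamma>2 C (\<phi> u) (\<phi> v)) \<and> (\<forall>w. finite {u\<in>V1. \<phi> u = w})"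

lemma coarse_pre_finite:
  assumes "coarse V1 \<Gamma>1 \<Gamma>2 C \<phi>" "finite F2"
  shows "finite {u\<in>V1. \<phi> u \<in> bball \<Gamma>2 C F2}"
proof -
  have "finite (bball \<Gamma>2 C F2)" using assms finite_bball unfolding coarse_def by blast
  moreover have "{u\<in>V1. \<phi> u \<in> bball \<Gamma>2 C F2} = (\<Union>w\<in>bball \<Gamma>2 C F2. {u\<in>V1. \<phi> u = w})" by auto
  ultimately show ?thesis using assms(1) unfolding coarse_def by auto
qed

lemma coarse_reach:
  assumes c: "coarse V1 \<Gamma>1 \<Gamma>2 C \<phi>" and x: "x \<in> V1"
    and r: "reachF \<Gamma>1 {u\<in>V1. \<phi> u \<in> bball \<Gamma>2 C F2} x y"
  shows "reachF \<Gamma>2 F2 (\<phi> x) (\<phi> y)"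
proof -
  let ?F1 = "{u\<in>V1. \<phi> u \<in> bball \<Gamma>2 C F2}"
  have x1: "x \<notin> ?F1" and rt: "(x, y) \<in> (avoid \<Gamma>1 ?F1)\<^sup>*" using r unfolding reachF_def by blast+
  have "\<phi> x \<notin> bball \<Gamma>2 C F2" using x1 x by blast
  then have "\<phi> x \<notin> F2" using bball_sup[of F2 \<Gamma>2 C] by blast
  then have base: "reachF \<Gamma>2 F2 (\<phi> x) (\<phi> x)" by (rule reachF_refl)
  from rt show ?thesis
  proof (induction rule: rtrancl_induct)
    case base then show ?case using \<open>reachF \<Gamma>2 F2 (\<phi> x) (\<phi> x)\<close> by simp
  next
    case (step y z)
    then have yz: "(y, z) \<in> \<Gamma>1" "y \<notin> ?F1" unfolding avoid_def by blast+
    then have "y \<in> V1" using c unfolding coarse_def by blast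
    then have "\<phi> y \<notin> bball \<Gamma>2 C F2" using yz(2) by blast
    moreover have "near \<Gamma>2 C (\<phi> y) (\<phi> z)" using c yz(1) unfolding coarse_def by blast
    ultimately have "reachF \<Gamma>2 F2 (\<phi> y) (\<phi> z)" using near_reachF by metis
    then show ?case using step.IH reachF_trans by metis
  qed
qed

lemma prec_map:
  fixes \<Gamma>1 :: "'a rel" and \<Gamma>2 :: "'b rel"
  assumes c: "coarse V1 \<Gamma>1 \<Gamma>2 C \<phi>" and X: "X \<subseteq> V1" and p: "prec \<Gamma>1 X Y"
  shows "prec \<Gamma>2 (\<phi> ` X) (\<phi> ` Y)"
  unfolding prec_def
proof (intro allI impI)
  fix F2 :: "'b set" assume "finite F2"
  then have "finite {u\<in>V1. \<phi> u \<in> bball \<Gamma>2 C F2}" by (rule coarse_pre_finite[OF c])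
  then have "\<exists>x\<in>X. \<exists>y\<in>Y. reachF \<Gamma>1 {u\<in>V1. \<phi> u \<in> bball \<Gamma>2 C F2} x y"
    using p unfolding prec_def by blast
  then obtain x y where xy: "x \<in> X" "y \<in> Y" "reachF \<Gamma>1 {u\<in>V1. \<phi> u \<in> bball \<Gamma>2 C F2} x y" by blast
  have "reachF \<Gamma>2 F2 (\<phi> x) (\<phi> y)" using coarse_reach[OF c _ xy(3)] xy(1) X by blast
  then show "\<exists>x\<in>\<phi> ` X. \<exists>y\<in>\<phi> ` Y. reachF \<Gamma>2 F2 x y" using xy by blast
qed

lemma tailc_map:
  fixes \<Gamma>1 :: "'a rel" and \<Gamma>2 :: "'b rel"
  assumes c: "coarse V1 \<Gamma>1 \<Gamma>2 C \<phi>" and Y: "Y \<subseteq> V1" and t: "tailc \<Gamma>1 Y"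
  shows "tailc \<Gamma>2 (\<phi> ` Y)"
  unfolding tailc_def
proof (intro allI impI)
  fix F2 :: "'b set" assume "finite F2"
  then have "finite {u\<in>V1. \<phi> u \<in> bball \<Gamma>2 C F2}" by (rule coarse_pre_finite[OF c])
  then have "\<exists>F'. finite F' \<and> (\<forall>y1\<in>Y-F'. \<forall>y2\<in>Y-F'. reachF \<Gamma>1 {u\<in>V1. \<phi> u \<in> bball \<Gamma>2 C F2} y1 y2)"
    using t unfolding tailc_def by blast
  then obtain F' where F': "finite F'"
    "\<forall>y1\<in>Y-F'. \<forall>y2\<in>Y-F'. reachF \<Gamma>1 {u\<in>V1. \<phi> u \<in> bball \<Gamma>2 C F2} y1 y2" by blast
  show "\<exists>F'. finite F' \<and> (\<forall>y1\<in>\<phi> ` Y - F'. \<forall>y2\<in>\<phi> ` Y - F'. reachF \<Gamma>2 F2 y1 y2)"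
  proof (intro exI[of _ "\<phi> ` F'"] conjI ballI)
    show "finite (\<phi> ` F')" using F'(1) by simp
  next
    fix z1 z2 assume z: "z1 \<in> \<phi> ` Y - \<phi> ` F'" "z2 \<in> \<phi> ` Y - \<phi> ` F'"
    then obtain y1 y2 where y: "y1 \<in> Y - F'" "y2 \<in> Y - F'" "z1 = \<phi> y1" "z2 = \<phi> y2" by blast
    then have "reachF \<Gamma>1 {u\<in>V1. \<phi> u \<in> bball \<Gamma>2 C F2} y1 y2" using F'(2) by blast
    then have "reachF \<Gamma>2 F2 (\<phi> y1) (\<phi> y2)" using coarse_reach[OF c] y(1) Y by blast
    then show "reachF \<Gamma>2 F2 z1 z2" using y by simp
  qed
qed

lemma prec_close:
  fixes \<Gamma> :: "'v rel"
  assumes inf: "\<forall>u. finite (\<Gamma>\<inverse> `` {u})" and g: "\<forall>x\<in>V. near \<Gamma> C x (g x)"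
    and X: "X \<subseteq> V" "infinite X"
  shows "prec \<Gamma> X (g ` X)"
  unfolding prec_def
proof (intro allI impI)
  fix F :: "'v set" assume "finite F"
  then have "finite (bball \<Gamma> C F)" using inf finite_bball by blast
  then have "infinite (X - bball \<Gamma> C F)" using X(2) Diff_infinite_finite by blast
  then obtain x where x: "x \<in> X - bball \<Gamma> C F" using infinite_imp_nonempty by blast
  then have "near \<Gamma> C x (g x)" using g X(1) by blast
  moreover have "x \<notin> bball \<Gamma> C F" using x by blast
  ultimately have "reachF \<Gamma> F x (g x)" by (rule near_reachF)
  then show "\<exists>x\<in>X. \<exists>y\<in>g ` X. reachF \<Gamma> F x y" using x by blast
qed




lemma walk_ray:
  fixes \<Gamma> :: "'v rel" and w :: "nat \<Rightarrow> 'v"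
  assumes step: "\<forall>t. w t = w (Suc t) \<or> (w t, w (Suc t)) \<in> \<Gamma>"
    and fin: "\<forall>v. finite {t. w t = v}"
  shows "\<exists>R \<tau>. is_ray \<Gamma> R \<and> (\<forall>n. R n = w (\<tau> n)) \<and> (\<forall>n. n \<le> \<tau> n)"
proof -
  define lv where "lv v = Max {t. w t = v}" for v
  have lv1: "w (lv (w s)) = w s" for s
  proof -
    have "{t. w t = w s} \<noteq> {}" by blast
    then have "lv (w s) \<in> {t. w t = w s}" unfolding lv_def using fin Max_in by blast
    then show ?thesis by simp
  qed
  have lv2: "s \<le> lv (w s)" for s unfolding lv_def using fin by (simp add: Max_ge)
  have lv3: "lv (w s) < t \<Longrightarrow> w t \<noteq> w s" for s t
  proof
    assume "lv (w s) < t" "w t = w s"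
    then have "t \<le> lv (w s)" unfolding lv_def using fin by (simp add: Max_ge)
    then show False using \<open>lv (w s) < t\<close> by simp
  qed
  define \<tau> where "\<tau> = rec_nat (lv (w 0)) (\<lambda>_ t. lv (w (Suc t)))"
  have \<tau>0: "\<tau> 0 = lv (w 0)" and \<tau>S: "\<tau> (Suc n) = lv (w (Suc (\<tau> n)))" for n
    by (simp_all add: \<tau>_def)
  have islast: "lv (w (\<tau> n)) = \<tau> n" for n
  proof (cases n)
    case 0 then show ?thesis using lv1[of 0] by (simp add: \<tau>0)
  next
    case (Suc m) then show ?thesis using lv1[of "Suc (\<tau> m)"] by (simp add: \<tau>S)
  qed
  have inc: "\<tau> n < \<tau> (Suc n)" for n using lv2[of "Suc (\<tau> n)"] by (simp add: \<tau>S)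
  then have smono: "strict_mono \<tau>" unfolding strict_mono_Suc_iff by blast
  have ge: "n \<le> \<tau> n" for n using smono by (rule strict_mono_imp_increasing)
  define R where "R n = w (\<tau> n)" for n
  have RS: "R (Suc n) = w (Suc (\<tau> n))" for n unfolding R_def \<tau>S using lv1 by simp
  have edge: "(R n, R (Suc n)) \<in> \<Gamma>" for n
  proof -
    have "w (Suc (\<tau> n)) \<noteq> w (\<tau> n)" using lv3[of "\<tau> n" "Suc (\<tau> n)"] islast[of n] by simp
    then show ?thesis using step RS[of n] unfolding R_def by metis
  qed
  have "inj R"
  proof (rule injI)
    fix a b assume "R a = R b"
    then have "\<tau> a = \<tau> b" using islast[of a] islast[of b] unfolding R_def by metis
    then show "a = b" using smono strict_mono_eq by metis
  qed
  then have "is_ray \<Gamma> R" using edge unfolding is_ray_def by blast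
  then show ?thesis using R_def ge by blast
qed

lemma walk_segment:
  fixes \<Gamma> :: "'v rel" and w :: "nat \<Rightarrow> 'v"
  assumes step: "\<forall>t. w t = w (Suc t) \<or> (w t, w (Suc t)) \<in> \<Gamma>"
    and avoid: "\<forall>s\<ge>a. w s \<notin> F" and ab: "a \<le> b"
  shows "(w a, w b) \<in> (avoid \<Gamma> F)\<^sup>*"
  using ab
proof (induction b rule: dec_induct)
  case base then show ?case by simp
next
  case (step b)
  have "w b \<notin> F" "w (Suc b) \<notin> F" using avoid step(1) by auto
  then have "w b = w (Suc b) \<or> (w b, w (Suc b)) \<in> avoid \<Gamma> F"
    using assms(1) unfolding avoid_def by blast
  then show ?case using step(3) by (metis rtrancl.rtrancl_into_rtrancl)
qed

lemma walk_prec: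
  fixes \<Gamma> :: "'v rel" and w :: "nat \<Rightarrow> 'v"
  assumes step: "\<forall>t. w t = w (Suc t) \<or> (w t, w (Suc t)) \<in> \<Gamma>"
    and fin: "\<forall>v. finite {t. w t = v}"
    and hit: "\<forall>t. \<exists>t'\<ge>t. w t' \<in> Z"
    and R: "\<forall>n. R n = w (\<tau> n)" "\<forall>n. n \<le> \<tau> n"
  shows "prec \<Gamma> (range R) Z"
  unfolding prec_def
proof (intro allI impI)
  fix F :: "'v set" assume fF: "finite F"
  have "{t. w t \<in> F} = (\<Union>v\<in>F. {t. w t = v})" by auto
  then have "finite {t. w t \<in> F}" using fF fin by auto
  then obtain M where M: "\<forall>t\<in>{t. w t \<in> F}. t < M" by (meson finite_nat_set_iff_bounded)
  have av: "\<forall>s\<ge>\<tau> M. w s \<notin> F"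
  proof (intro allI impI)
    fix s assume "\<tau> M \<le> s"
    then have "M \<le> s" using R(2) order_trans by blast
    then show "w s \<notin> F" using M by fastforce
  qed
  obtain t' where t': "t' \<ge> \<tau> M" "w t' \<in> Z" using hit by blast
  have "(w (\<tau> M), w t') \<in> (avoid \<Gamma> F)\<^sup>*" by (rule walk_segment[OF step av t'(1)])
  moreover have "w (\<tau> M) \<notin> F" using av by blast
  ultimately have "reachF \<Gamma> F (R M) (w t')" unfolding reachF_def using R(1) by simp
  then show "\<exists>x\<in>range R. \<exists>y\<in>Z. reachF \<Gamma> F x y" using t'(2) by blast
qed

lemma coarse_walk:
  fixes \<Gamma> :: "'v rel" and f :: "nat \<Rightarrow> 'v"
  assumes nf: "\<forall>k. near \<Gamma> C (f k) (f (Suc k))"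
    and fin: "\<forall>v. finite {k. near \<Gamma> C v (f k)}"
  shows "\<exists>w. (\<forall>t. w t = w (Suc t) \<or> (w t, w (Suc t)) \<in> \<Gamma>) \<and> (\<forall>v. finite {t. w t = v})
           \<and> (\<forall>t. \<exists>t'\<ge>t. w t' \<in> range f)"
proof -
  define dist where "dist u v = (LEAST n. (u, v) \<in> \<Gamma> ^^ n)" for u v
  have d1: "dist u v \<le> n" "(u, v) \<in> \<Gamma> ^^ dist u v" if "(u, v) \<in> \<Gamma> ^^ n" for u v n
    using that unfolding dist_def by (auto intro: Least_le LeastI)
  define nh where "nh u v = (SOME x. (u, x) \<in> \<Gamma> \<and> (x, v) \<in> \<Gamma> ^^ (dist u v - 1))" for u v
  have d2: "(u, nh u v) \<in> \<Gamma> \<and> (nh u v, v) \<in> \<Gamma> ^^ (dist u v - 1) \<and> dist (nh u v) v < dist u v"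
    if "(u, v) \<in> \<Gamma> ^^ n" "u \<noteq> v" for u v n
  proof -
    have uv: "(u, v) \<in> \<Gamma> ^^ dist u v" using d1(2)[OF that(1)] .
    have "dist u v \<noteq> 0" using uv that(2) by (metis relpow_0_E)
    then have "(u, v) \<in> \<Gamma> ^^ Suc (dist u v - 1)" using uv by simp
    then have "\<exists>x. (u, x) \<in> \<Gamma> \<and> (x, v) \<in> \<Gamma> ^^ (dist u v - 1)" by (rule relpow_Suc_D2)
    then have h: "(u, nh u v) \<in> \<Gamma> \<and> (nh u v, v) \<in> \<Gamma> ^^ (dist u v - 1)"
      unfolding nh_def by (rule someI_ex)
    then have "dist (nh u v) v \<le> dist u v - 1" using d1(1) by blast
    then show ?thesis using h \<open>dist u v \<noteq> 0\<close> by simp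
  qed
  define nxt where "nxt p = (if fst p = f (snd p) then (fst p, Suc (snd p)) else (nh (fst p) (f (snd p)), snd p))"
    for p :: "'v \<times> nat"
  define st where "st t = (nxt ^^ t) (f 0, 0)" for t
  have st0: "st 0 = (f 0, 0)" and stS: "st (Suc t) = nxt (st t)" for t by (simp_all add: st_def)
  define u where "u t = fst (st t)" for t
  define k where "k t = snd (st t)" for t
  define d where "d t = dist (u t) (f (k t))" for t
  have inv: "near \<Gamma> C (u t) (f (k t))" for t
  proof (induction t)
    case 0 then show ?case using near_refl by (simp add: u_def k_def st0)
  next
    case (Suc t)
    show ?case
    proof (cases "u t = f (k t)")
      case True
      then have "u (Suc t) = f (k t)" "k (Suc t) = Suc (k t)"
        by (simp_all add: u_def k_def stS nxt_def)
      then show ?thesis using nf by simp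
    next
      case False
      then have e: "u (Suc t) = nh (u t) (f (k t))" "k (Suc t) = k t"
        by (simp_all add: u_def k_def stS nxt_def)
      obtain n where n: "n \<le> C" "(u t, f (k t)) \<in> \<Gamma> ^^ n" using Suc unfolding near_def by blast
      have "(nh (u t) (f (k t)), f (k t)) \<in> \<Gamma> ^^ (dist (u t) (f (k t)) - 1)"
        using d2[OF n(2) False] by blast
      moreover have "dist (u t) (f (k t)) - 1 \<le> C" using d1(1)[OF n(2)] n(1) by simp
      ultimately show ?thesis unfolding near_def using e by auto
    qed
  qed
  have dC: "d t \<le> C" and dR: "(u t, f (k t)) \<in> \<Gamma> ^^ d t" for t
  proof -
    obtain n where n: "n \<le> C" "(u t, f (k t)) \<in> \<Gamma> ^^ n" using inv[of t] unfolding near_def by blast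
    show "d t \<le> C" using d1(1)[OF n(2)] n(1) unfolding d_def by simp
    show "(u t, f (k t)) \<in> \<Gamma> ^^ d t" using d1(2)[OF n(2)] unfolding d_def by simp
  qed
  have pot: "t + d t \<le> (C + 1) * k t + C" for t
  proof (induction t)
    case 0
    have "d 0 = 0" unfolding d_def u_def k_def st0 dist_def by (simp add: Least_eq_0)
    then show ?case by simp
  next
    case (Suc t)
    show ?case
    proof (cases "u t = f (k t)")
      case True
      then have "k (Suc t) = Suc (k t)" by (simp_all add: u_def k_def stS nxt_def)
      moreover have "d t = 0" using True unfolding d_def dist_def by (simp add: Least_eq_0)
      ultimately show ?thesis using Suc dC[of "Suc t"] by simp
    next
      case False
      then have e: "u (Suc t) = nh (u t) (f (k t))" "k (Suc t) = k t"
        by (simp_all add: u_def k_def stS nxt_def)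
      have "dist (nh (u t) (f (k t))) (f (k t)) < dist (u t) (f (k t))"
        using d2[OF dR[of t] False] by blast
      then have "d (Suc t) < d t" unfolding d_def e by simp
      then show ?thesis using Suc e by simp
    qed
  qed
  have stepw: "u t = u (Suc t) \<or> (u t, u (Suc t)) \<in> \<Gamma>" for t
  proof (cases "u t = f (k t)")
    case True
    then show ?thesis by (simp add: u_def k_def stS nxt_def)
  next
    case False
    then have e: "u (Suc t) = nh (u t) (f (k t))" by (simp add: u_def k_def stS nxt_def)
    show ?thesis using d2[OF dR[of t] False] e by simp
  qed
  have finw: "finite {t. u t = v}" for v
  proof -
    obtain M where M: "\<forall>x\<in>{k. near \<Gamma> C v (f k)}. x < M"
      using fin finite_nat_set_iff_bounded by blast
    have "{t. u t = v} \<subseteq> {..(C + 1) * M + C}"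
    proof
      fix t assume "t \<in> {t. u t = v}"
      then have "near \<Gamma> C v (f (k t))" using inv[of t] by simp
      then have "k t < M" using M by blast
      then have "(C + 1) * k t \<le> (C + 1) * M" using mult_le_mono2[of "k t" M "C + 1"] by linarith
      then show "t \<in> {..(C + 1) * M + C}" using pot[of t] by simp
    qed
    then show ?thesis using finite_subset by blast
  qed
  have hitw: "\<exists>t'\<ge>t. u t' \<in> range f" for t
  proof -
    have "\<forall>t. d t = n \<longrightarrow> (\<exists>t'\<ge>t. u t' \<in> range f)" for n
    proof (induction n rule: less_induct)
      case (less n)
      show ?case
      proof (intro allI impI)
        fix t assume dt: "d t = n"
        show "\<exists>t'\<ge>t. u t' \<in> range f"
        proof (cases "u t = f (k t)")
          case True then show ?thesis by blast
        next
          case False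
          then have e: "u (Suc t) = nh (u t) (f (k t))" "k (Suc t) = k t"
            by (simp_all add: u_def k_def stS nxt_def)
          have "dist (nh (u t) (f (k t))) (f (k t)) < dist (u t) (f (k t))"
            using d2[OF dR[of t] False] by blast
          then have "d (Suc t) < n" unfolding d_def e using dt d_def by simp
          then obtain t' where "t' \<ge> Suc t" "u t' \<in> range f" using less by blast
          then show ?thesis by (intro exI[of _ t']) simp
        qed
      qed
    qed
    then show ?thesis by blast
  qed
  show ?thesis using stepw finw hitw by blast
qed




lemma ray_in_V:
  assumes "\<Gamma> \<subseteq> V \<times> V" "r \<in> rays_antirays \<Gamma>"
  shows "range r \<subseteq> V"
proof
  fix x assume "x \<in> range r"
  then obtain n where n: "x = r n" by blast
  from assms(2) have "(r n, r (Suc n)) \<in> \<Gamma> \<or> (r (Suc n), r n) \<in> \<Gamma>"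
    unfolding rays_antirays_def is_ray_def is_antiray_def by blast
  then show "x \<in> V" using assms(1) n by blast
qed

lemma ra_inj: "r \<in> rays_antirays \<Gamma> \<Longrightarrow> inj r"
  unfolding rays_antirays_def is_ray_def is_antiray_def by blast

lemma ra_infinite: "r \<in> rays_antirays \<Gamma> \<Longrightarrow> infinite (range r)"
  using ra_inj finite_imageD infinite_UNIV_nat by blast

lemma ray_exists:
  fixes \<Gamma>1 :: "'a rel" and \<Gamma>2 :: "'b rel"
  assumes c: "coarse V1 \<Gamma>1 \<Gamma>2 C \<phi>" and out: "\<forall>u. finite (\<Gamma>2 `` {u})" and r: "is_ray \<Gamma>1 r"
  shows "\<exists>R. is_ray \<Gamma>2 R \<and> prec \<Gamma>2 (range R) (\<phi> ` range r)"
proof -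
  define f where "f k = \<phi> (r k)" for k
  have rV: "r k \<in> V1" for k
  proof -
    have "(r k, r (Suc k)) \<in> \<Gamma>1" using r unfolding is_ray_def by blast
    then show ?thesis using c unfolding coarse_def by blast
  qed
  have nf: "\<forall>k. near \<Gamma>2 C (f k) (f (Suc k))"
  proof
    fix k
    have "(r k, r (Suc k)) \<in> \<Gamma>1" using r unfolding is_ray_def by blast
    then show "near \<Gamma>2 C (f k) (f (Suc k))" using c unfolding coarse_def f_def by blast
  qed
  have fin: "\<forall>v. finite {k. near \<Gamma>2 C v (f k)}"
  proof
    fix v
    have fb: "finite {x. near \<Gamma>2 C v x}" using finite_fball[OF out] .
    have "{u\<in>V1. \<phi> u \<in> {x. near \<Gamma>2 C v x}} = (\<Union>w\<in>{x. near \<Gamma>2 C v x}. {u\<in>V1. \<phi> u = w})" by auto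
    then have "finite {u\<in>V1. \<phi> u \<in> {x. near \<Gamma>2 C v x}}" using fb c unfolding coarse_def by auto
    moreover have "inj r" using r unfolding is_ray_def by blast
    ultimately have "finite (r -` {u\<in>V1. \<phi> u \<in> {x. near \<Gamma>2 C v x}})" by (rule finite_vimageI)
    moreover have "{k. near \<Gamma>2 C v (f k)} \<subseteq> r -` {u\<in>V1. \<phi> u \<in> {x. near \<Gamma>2 C v x}}"
      using rV unfolding f_def by auto
    ultimately show "finite {k. near \<Gamma>2 C v (f k)}" using finite_subset by blast
  qed
  obtain w where w: "\<forall>t. w t = w (Suc t) \<or> (w t, w (Suc t)) \<in> \<Gamma>2" "\<forall>v. finite {t. w t = v}"
    "\<forall>t. \<exists>t'\<ge>t. w t' \<in> range f" using coarse_walk[OF nf fin] by blast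
  obtain R \<tau> where R: "is_ray \<Gamma>2 R" "\<forall>n. R n = w (\<tau> n)" "\<forall>n. n \<le> \<tau> n"
    using walk_ray[OF w(1) w(2)] by blast
  have "prec \<Gamma>2 (range R) (range f)" by (rule walk_prec[OF w(1) w(2) w(3) R(2) R(3)])
  moreover have "range f = \<phi> ` range r" unfolding f_def by auto
  ultimately show ?thesis using R(1) by auto
qed

lemma coarse_converse:
  assumes "coarse V1 \<Gamma>1 \<Gamma>2 C \<phi>" "\<forall>u. finite (\<Gamma>2 `` {u})"
  shows "coarse V1 (\<Gamma>1\<inverse>) (\<Gamma>2\<inverse>) C \<phi>"
  using assms unfolding coarse_def near_converse by auto

lemma antiray_iff: "is_antiray \<Gamma> r \<longleftrightarrow> is_ray (\<Gamma>\<inverse>) r"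
  unfolding is_antiray_def is_ray_def by auto

lemma ra_exists:
  fixes \<Gamma>1 :: "'a rel" and \<Gamma>2 :: "'b rel"
  assumes n: "nice \<Gamma>2 K" and c: "coarse V1 \<Gamma>1 \<Gamma>2 C \<phi>" and r: "r \<in> rays_antirays \<Gamma>1"
  shows "\<exists>R\<in>rays_antirays \<Gamma>2. prec \<Gamma>2 (range R) (\<phi> ` range r)"
proof -
  have out: "\<forall>u. finite (\<Gamma>2 `` {u})" using n unfolding nice_def by blast
  have out2: "\<forall>u. finite (\<Gamma>2\<inverse> `` {u})" using n unfolding nice_def by blast
  from r have "is_ray \<Gamma>1 r \<or> is_antiray \<Gamma>1 r" unfolding rays_antirays_def by blast
  then show ?thesis
  proof
    assume "is_ray \<Gamma>1 r"
    then obtain R where "is_ray \<Gamma>2 R" "prec \<Gamma>2 (range R) (\<phi> ` range r)"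
      using ray_exists[OF c out] by blast
    then show ?thesis unfolding rays_antirays_def by blast
  next
    assume "is_antiray \<Gamma>1 r"
    then have "is_ray (\<Gamma>1\<inverse>) r" by (simp add: antiray_iff)
    then obtain R where R: "is_ray (\<Gamma>2\<inverse>) R" "prec (\<Gamma>2\<inverse>) (range R) (\<phi> ` range r)"
      using ray_exists[OF coarse_converse[OF c out] out2] by blast
    have "is_antiray \<Gamma>2 R" using R(1) by (simp add: antiray_iff)
    moreover have "prec \<Gamma>2 (\<phi> ` range r) (range R)" using R(2) by (simp add: prec_converse)
    then have "prec \<Gamma>2 (range R) (\<phi> ` range r)" by (rule prec_sym[OF n])
    ultimately show ?thesis unfolding rays_antirays_def by blast
  qed
qed

lemma end_equiv_nice:
  fixes \<Gamma> :: "'v rel"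
  assumes n: "nice \<Gamma> K"
  shows "(r, s) \<in> end_equiv \<Gamma> \<longleftrightarrow> r \<in> rays_antirays \<Gamma> \<and> s \<in> rays_antirays \<Gamma> \<and> prec \<Gamma> (range r) (range s)"
  unfolding end_equiv_def end_prec_iff_prec using prec_sym[OF n] by blast

lemma equiv_ends:
  fixes \<Gamma> :: "'v rel"
  assumes n: "nice \<Gamma> K"
  shows "equiv (rays_antirays \<Gamma>) (end_equiv \<Gamma>)"
proof (rule equivI)
  show "end_equiv \<Gamma> \<subseteq> rays_antirays \<Gamma> \<times> rays_antirays \<Gamma>" unfolding end_equiv_def by blast
next
  show "refl_on (rays_antirays \<Gamma>) (end_equiv \<Gamma>)"
  proof (rule refl_onI)
    fix r assume "r \<in> rays_antirays \<Gamma>"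
    then show "(r, r) \<in> end_equiv \<Gamma>"
      unfolding end_equiv_nice[OF n] using prec_refl ra_infinite by blast
  qed
next
  show "sym (end_equiv \<Gamma>)" unfolding end_equiv_def by (rule symI) blast
next
  show "trans (end_equiv \<Gamma>)"
  proof (rule transI)
    fix r s t assume "(r, s) \<in> end_equiv \<Gamma>" "(s, t) \<in> end_equiv \<Gamma>"
    then have h: "r \<in> rays_antirays \<Gamma>" "s \<in> rays_antirays \<Gamma>" "t \<in> rays_antirays \<Gamma>"
      "prec \<Gamma> (range r) (range s)" "prec \<Gamma> (range s) (range t)"
      unfolding end_equiv_nice[OF n] by blast+
    have "prec \<Gamma> (range r) (range t)" using prec_trans[OF h(4) tailc_ra[OF n h(2)] h(5)] .
    then show "(r, t) \<in> end_equiv \<Gamma>" unfolding end_equiv_nice[OF n] using h by blast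
  qed
qed

lemma quotient_eqpoll:
  assumes r: "equiv A r" and s: "equiv B s" and fB: "\<forall>x\<in>A. f x \<in> B"
    and resp: "\<forall>x\<in>A. \<forall>y\<in>A. (x, y) \<in> r \<longleftrightarrow> (f x, f y) \<in> s"
    and sur: "\<forall>y\<in>B. \<exists>x\<in>A. (f x, y) \<in> s"
  shows "A // r \<approx> B // s"
proof -
  define h where "h X = s `` {f (SOME x. x \<in> X)}" for X
  have rep: "(SOME x. x \<in> X) \<in> A \<and> X = r `` {SOME x. x \<in> X}" if XA: "X \<in> A // r" for X
  proof -
    obtain a where a: "a \<in> A" "X = r `` {a}" using XA by (rule quotientE)
    then have "a \<in> X" using equiv_class_self[OF r] by blast
    then have x: "(SOME x. x \<in> X) \<in> X" by (rule someI)
    then have "(a, SOME x. x \<in> X) \<in> r" using a by blast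
    then have "X = r `` {SOME x. x \<in> X}" using a equiv_class_eq[OF r] by blast
    moreover have "(SOME x. x \<in> X) \<in> A" using x a r unfolding equiv_def refl_on_def by blast
    ultimately show ?thesis by blast
  qed
  have "bij_betw h (A // r) (B // s)"
  proof (rule bij_betw_imageI)
    show "inj_on h (A // r)"
    proof (rule inj_onI)
      fix X Y assume X: "X \<in> A // r" and Y: "Y \<in> A // r" and e: "h X = h Y"
      let ?x = "SOME x. x \<in> X" and ?y = "SOME x. x \<in> Y"
      have "(f ?x, f ?y) \<in> s" using e rep[OF X] rep[OF Y] fB eq_equiv_class_iff[OF s] unfolding h_def by blast
      then have "(?x, ?y) \<in> r" using resp rep[OF X] rep[OF Y] by blast
      then show "X = Y" using rep[OF X] rep[OF Y] equiv_class_eq[OF r] by metis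
    qed
  next
    show "h ` (A // r) = B // s"
    proof
      show "h ` (A // r) \<subseteq> B // s"
      proof
        fix Z assume "Z \<in> h ` (A // r)"
        then obtain X where X: "X \<in> A // r" "Z = h X" by blast
        then show "Z \<in> B // s" unfolding h_def using rep[OF X(1)] fB by (blast intro: quotientI)
      qed
    next
      show "B // s \<subseteq> h ` (A // r)"
      proof
        fix Z assume "Z \<in> B // s"
        then obtain b where b: "b \<in> B" "Z = s `` {b}" by (rule quotientE)
        then obtain x where x: "x \<in> A" "(f x, b) \<in> s" using sur by blast
        let ?X = "r `` {x}"
        have X: "?X \<in> A // r" using x(1) by (rule quotientI)
        have "x \<in> ?X" by (rule equiv_class_self[OF r x(1)])
        then have "(SOME y. y \<in> ?X) \<in> ?X" by (rule someI)
        then have "(x, SOME y. y \<in> ?X) \<in> r" by simp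
        then have "(f x, f (SOME y. y \<in> ?X)) \<in> s" using resp x(1) rep[OF X] by blast
        then have "s `` {f x} = s `` {f (SOME y. y \<in> ?X)}" by (rule equiv_class_eq[OF s])
        then have "h ?X = s `` {f x}" unfolding h_def by simp
        also have "\<dots> = Z" using equiv_class_eq[OF s x(2)] b by simp
        finally show "Z \<in> h ` (A // r)" using X by blast
      qed
    qed
  qed
  then show ?thesis unfolding eqpoll_def by blast
qed




theorem ends_transfer:
  fixes \<Gamma>1 :: "'a rel" and \<Gamma>2 :: "'b rel"
  assumes n1: "nice \<Gamma>1 K1" and n2: "nice \<Gamma>2 K2"
    and c1: "coarse V1 \<Gamma>1 \<Gamma>2 C \<phi>" and c2: "coarse V2 \<Gamma>2 \<Gamma>1 C \<psi>"
    and \<phi>V: "\<forall>x\<in>V1. \<phi> x \<in> V2" and \<psi>V: "\<forall>y\<in>V2. \<psi> y \<in> V1"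
    and cl1: "\<forall>x\<in>V1. near \<Gamma>1 C x (\<psi> (\<phi> x))" and cl2: "\<forall>y\<in>V2. near \<Gamma>2 C y (\<phi> (\<psi> y))"
  shows "ends \<Gamma>1 \<approx> ends \<Gamma>2"
proof -
  let ?A = "rays_antirays \<Gamma>1" and ?B = "rays_antirays \<Gamma>2"
  have sub1: "\<Gamma>1 \<subseteq> V1 \<times> V1" using c1 unfolding coarse_def by blast
  have sub2: "\<Gamma>2 \<subseteq> V2 \<times> V2" using c2 unfolding coarse_def by blast
  have in1: "\<forall>u. finite (\<Gamma>1\<inverse> `` {u})" using n1 unfolding nice_def by blast
  have in2: "\<forall>u. finite (\<Gamma>2\<inverse> `` {u})" using n2 unfolding nice_def by blast
  define f where "f r = (SOME R. R \<in> ?B \<and> prec \<Gamma>2 (range R) (\<phi> ` range r))" for r :: "nat \<Rightarrow> 'a"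
  have f: "f r \<in> ?B \<and> prec \<Gamma>2 (range (f r)) (\<phi> ` range r)" if "r \<in> ?A" for r
  proof -
    have "\<exists>R. R \<in> ?B \<and> prec \<Gamma>2 (range R) (\<phi> ` range r)" using ra_exists[OF n2 c1 that] by blast
    then show ?thesis unfolding f_def by (rule someI_ex)
  qed
  have V1r: "range r \<subseteq> V1" if "r \<in> ?A" for r using ray_in_V[OF sub1 that] .
  have V2r: "range r \<subseteq> V2" if "r \<in> ?B" for r using ray_in_V[OF sub2 that] .
  have tA: "tailc \<Gamma>1 (range r)" if "r \<in> ?A" for r using tailc_ra[OF n1 that] .
  have tB: "tailc \<Gamma>2 (range r)" if "r \<in> ?B" for r using tailc_ra[OF n2 that] .
  have tphi: "tailc \<Gamma>2 (\<phi> ` range r)" if "r \<in> ?A" for r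
    using tailc_map[OF c1 V1r[OF that] tA[OF that]] .
  have phiV: "\<phi> ` range r \<subseteq> V2" if "r \<in> ?A" for r using V1r[OF that] \<phi>V by blast
  have psiV: "\<psi> ` range r \<subseteq> V1" if "r \<in> ?B" for r using V2r[OF that] \<psi>V by blast
  have tpsiphi: "tailc \<Gamma>1 (\<psi> ` \<phi> ` range r)" if "r \<in> ?A" for r
    using tailc_map[OF c2 phiV[OF that] tphi[OF that]] .
  have tphipsi: "tailc \<Gamma>2 (\<phi> ` \<psi> ` range r)" if "r \<in> ?B" for r
    using tailc_map[OF c1 psiV[OF that] tailc_map[OF c2 V2r[OF that] tB[OF that]]] .
  have close1: "prec \<Gamma>1 (range r) (\<psi> ` \<phi> ` range r)" if "r \<in> ?A" for r
  proof -
    have "\<forall>x\<in>V1. near \<Gamma>1 C x ((\<psi> \<circ> \<phi>) x)" using cl1 by simp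
    then have "prec \<Gamma>1 (range r) ((\<psi> \<circ> \<phi>) ` range r)"
      using prec_close[OF in1 _ V1r[OF that] ra_infinite[OF that]] by blast
    then show ?thesis by (simp add: image_comp)
  qed
  have close2: "prec \<Gamma>2 (range r) (\<phi> ` \<psi> ` range r)" if "r \<in> ?B" for r
  proof -
    have "\<forall>x\<in>V2. near \<Gamma>2 C x ((\<phi> \<circ> \<psi>) x)" using cl2 by simp
    then have "prec \<Gamma>2 (range r) ((\<phi> \<circ> \<psi>) ` range r)"
      using prec_close[OF in2 _ V2r[OF that] ra_infinite[OF that]] by blast
    then show ?thesis by (simp add: image_comp)
  qed
  have resp: "(r, s) \<in> end_equiv \<Gamma>1 \<longleftrightarrow> (f r, f s) \<in> end_equiv \<Gamma>2" if r: "r \<in> ?A" and s: "s \<in> ?A" for r s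
  proof
    assume "(r, s) \<in> end_equiv \<Gamma>1"
    then have "prec \<Gamma>1 (range r) (range s)" unfolding end_equiv_nice[OF n1] by blast
    then have p: "prec \<Gamma>2 (\<phi> ` range r) (\<phi> ` range s)" by (rule prec_map[OF c1 V1r[OF r]])
    have a: "prec \<Gamma>2 (range (f r)) (\<phi> ` range r)" using f[OF r] by blast
    have b: "prec \<Gamma>2 (\<phi> ` range s) (range (f s))" using f[OF s] prec_sym[OF n2] by blast
    have "prec \<Gamma>2 (range (f r)) (range (f s))"
      using prec_trans[OF prec_trans[OF a tphi[OF r] p] tphi[OF s] b] .
    then show "(f r, f s) \<in> end_equiv \<Gamma>2" unfolding end_equiv_nice[OF n2] using f r s by blast
  next
    assume "(f r, f s) \<in> end_equiv \<Gamma>2"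
    then have p: "prec \<Gamma>2 (range (f r)) (range (f s))" unfolding end_equiv_nice[OF n2] by blast
    have a: "prec \<Gamma>2 (\<phi> ` range r) (range (f r))" using f[OF r] prec_sym[OF n2] by blast
    have b: "prec \<Gamma>2 (range (f s)) (\<phi> ` range s)" using f[OF s] by blast
    have "prec \<Gamma>2 (\<phi> ` range r) (\<phi> ` range s)"
      using prec_trans[OF prec_trans[OF a tB[OF conjunct1[OF f[OF r]]] p] tB[OF conjunct1[OF f[OF s]]] b] .
    then have q: "prec \<Gamma>1 (\<psi> ` \<phi> ` range r) (\<psi> ` \<phi> ` range s)" by (rule prec_map[OF c2 phiV[OF r]])
    have b2: "prec \<Gamma>1 (\<psi> ` \<phi> ` range s) (range s)" using close1[OF s] prec_sym[OF n1] by blast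
    have "prec \<Gamma>1 (range r) (range s)"
      using prec_trans[OF prec_trans[OF close1[OF r] tpsiphi[OF r] q] tpsiphi[OF s] b2] .
    then show "(r, s) \<in> end_equiv \<Gamma>1" unfolding end_equiv_nice[OF n1] using r s by blast
  qed
  have sur: "\<exists>r\<in>?A. (f r, s) \<in> end_equiv \<Gamma>2" if s: "s \<in> ?B" for s
  proof -
    obtain r where r: "r \<in> ?A" "prec \<Gamma>1 (range r) (\<psi> ` range s)" using ra_exists[OF n1 c2 s] by blast
    have a: "prec \<Gamma>2 (range (f r)) (\<phi> ` range r)" using f[OF r(1)] by blast
    have b: "prec \<Gamma>2 (\<phi> ` range r) (\<phi> ` \<psi> ` range s)" by (rule prec_map[OF c1 V1r[OF r(1)] r(2)])
    have c: "prec \<Gamma>2 (\<phi> ` \<psi> ` range s) (range s)" using close2[OF s] prec_sym[OF n2] by blast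
    have "prec \<Gamma>2 (range (f r)) (range s)"
      using prec_trans[OF prec_trans[OF a tphi[OF r(1)] b] tphipsi[OF s] c] .
    then have "(f r, s) \<in> end_equiv \<Gamma>2" unfolding end_equiv_nice[OF n2] using f[OF r(1)] s by blast
    then show ?thesis using r(1) by blast
  qed
  have "?A // end_equiv \<Gamma>1 \<approx> ?B // end_equiv \<Gamma>2"
    using quotient_eqpoll[OF equiv_ends[OF n1] equiv_ends[OF n2]] f resp sur by blast
  then show ?thesis unfolding ends_def .
qed




lemma ends_antichain_nice:
  fixes \<Gamma> :: "'v rel"
  assumes n: "nice \<Gamma> K"
  shows "ends_antichain \<Gamma>"
proof -
  have eq: "equiv (rays_antirays \<Gamma>) (end_equiv \<Gamma>)" by (rule equiv_ends[OF n])
  have cls: "X = end_equiv \<Gamma> `` {x} \<and> x \<in> rays_antirays \<Gamma>" if XX: "X \<in> ends \<Gamma>" "x \<in> X" for X x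
  proof -
    obtain a where a: "a \<in> rays_antirays \<Gamma>" "X = end_equiv \<Gamma> `` {a}"
      using XX(1) unfolding ends_def by (rule quotientE)
    then have "(a, x) \<in> end_equiv \<Gamma>" using XX(2) by blast
    then have "X = end_equiv \<Gamma> `` {x}" using a(2) equiv_class_eq[OF eq] by blast
    moreover have "x \<in> rays_antirays \<Gamma>" using \<open>(a, x) \<in> end_equiv \<Gamma>\<close> unfolding end_equiv_def by blast
    ultimately show ?thesis by blast
  qed
  have key: "E = F" if EF: "E \<in> ends \<Gamma>" "F \<in> ends \<Gamma>" "end_le \<Gamma> E F" for E F
  proof -
    obtain r s where rs: "r \<in> E" "s \<in> F" "end_prec \<Gamma> (range r) (range s)"
      using EF(3) unfolding end_le_def by blast
    have E: "E = end_equiv \<Gamma> `` {r}" "r \<in> rays_antirays \<Gamma>" using cls[OF EF(1) rs(1)] by blast+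
    have F: "F = end_equiv \<Gamma> `` {s}" "s \<in> rays_antirays \<Gamma>" using cls[OF EF(2) rs(2)] by blast+
    have "(r, s) \<in> end_equiv \<Gamma>" unfolding end_equiv_nice[OF n] end_prec_iff_prec[symmetric]
      using rs(3) E(2) F(2) by blast
    then show ?thesis using E(1) F(1) equiv_class_eq[OF eq] by blast
  qed
  show ?thesis unfolding ends_antichain_def using key by blast
qed

definition prodg :: "'i set \<Rightarrow> 'v rel \<Rightarrow> ('i \<times> 'v) rel" where
  "prodg I \<Gamma> = {((i, u), (i, v)) | i u v. i \<in> I \<and> (u, v) \<in> \<Gamma>}"

lemma prodg_edge: "(p, q) \<in> prodg I \<Gamma> \<Longrightarrow> (snd p, snd q) \<in> \<Gamma> \<and> fst p = fst q \<and> fst p \<in> I"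
  unfolding prodg_def by auto

lemma prodg_relpow:
  "(u, v) \<in> \<Gamma> ^^ n \<Longrightarrow> i \<in> I \<Longrightarrow> ((i, u), (i, v)) \<in> (prodg I \<Gamma>) ^^ n"
proof (induction n arbitrary: v)
  case 0 then show ?case by simp
next
  case (Suc n)
  from Suc.prems(1) obtain w where "(u, w) \<in> \<Gamma> ^^ n" "(w, v) \<in> \<Gamma>" by (rule relpow_Suc_E)
  then have "((i, u), (i, w)) \<in> (prodg I \<Gamma>) ^^ n" "((i, w), (i, v)) \<in> prodg I \<Gamma>"
    using Suc unfolding prodg_def by auto
  then show ?case by (rule relpow_Suc_I)
qed

lemma nice_prodg:
  fixes \<Gamma> :: "'v rel" and I :: "'i set"
  assumes n: "nice \<Gamma> K"
  shows "nice (prodg I \<Gamma>) K"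
proof -
  have o: "finite (prodg I \<Gamma> `` {p})" for p
  proof -
    have "prodg I \<Gamma> `` {p} \<subseteq> {fst p} \<times> (\<Gamma> `` {snd p})" unfolding prodg_def by auto
    then show ?thesis using n unfolding nice_def by (meson finite_SigmaI finite.emptyI finite.insertI finite_subset)
  qed
  have i: "finite ((prodg I \<Gamma>)\<inverse> `` {p})" for p
  proof -
    have "(prodg I \<Gamma>)\<inverse> `` {p} \<subseteq> {fst p} \<times> (\<Gamma>\<inverse> `` {snd p})" unfolding prodg_def by auto
    then show ?thesis using n unfolding nice_def by (meson finite_SigmaI finite.emptyI finite.insertI finite_subset)
  qed
  have r: "near (prodg I \<Gamma>) K q p" if pq: "(p, q) \<in> prodg I \<Gamma>" for p q
  proof -
    obtain j u v where e: "p = (j, u)" "q = (j, v)" "j \<in> I" "(u, v) \<in> \<Gamma>" using pq unfolding prodg_def by blast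
    then have "near \<Gamma> K v u" using n unfolding nice_def by blast
    then obtain m where m: "m \<le> K" "(v, u) \<in> \<Gamma> ^^ m" unfolding near_def by blast
    have "((j, v), (j, u)) \<in> (prodg I \<Gamma>) ^^ m" using prodg_relpow[OF m(2) e(3)] .
    then show ?thesis unfolding near_def e using m(1) by blast
  qed
  show ?thesis unfolding nice_def using o i r by blast
qed

lemma prodg_rtrancl_down:
  assumes "(a, b) \<in> (avoid (prodg I \<Gamma>) F)\<^sup>*"
  shows "fst a = fst b \<and> (snd a, snd b) \<in> (avoid \<Gamma> {u. (fst a, u) \<in> F})\<^sup>*"
  using assms
proof (induction rule: rtrancl_induct)
  case base then show ?case by simp
next
  case (step b c)
  then obtain j u v where e: "b = (j, u)" "c = (j, v)" "(u, v) \<in> \<Gamma>" "b \<notin> F" "c \<notin> F"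
    unfolding prodg_def avoid_def by blast
  then have "(u, v) \<in> avoid \<Gamma> {u. (fst a, u) \<in> F}" using step.IH unfolding avoid_def by auto
  then show ?case using step.IH e by (auto intro: rtrancl_into_rtrancl)
qed

lemma prodg_rtrancl_up:
  assumes "(u, v) \<in> (avoid \<Gamma> G)\<^sup>*" "{u. (i, u) \<in> F} \<subseteq> G" "i \<in> I"
  shows "((i, u), (i, v)) \<in> (avoid (prodg I \<Gamma>) F)\<^sup>*"
  using assms(1)
proof (induction rule: rtrancl_induct)
  case base then show ?case by simp
next
  case (step v w)
  then have "((i, v), (i, w)) \<in> avoid (prodg I \<Gamma>) F"
    using assms(2,3) unfolding avoid_def prodg_def by auto
  then show ?case using step.IH by (rule rtrancl_into_rtrancl[rotated])
qed

lemma prodg_ra: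
  assumes "\<rho> \<in> rays_antirays (prodg I \<Gamma>)"
  shows "fst (\<rho> 0) \<in> I \<and> (\<forall>n. fst (\<rho> n) = fst (\<rho> 0)) \<and> (snd \<circ> \<rho>) \<in> rays_antirays \<Gamma>"
proof -
  have e: "(\<rho> n, \<rho> (Suc n)) \<in> prodg I \<Gamma> \<or> (\<rho> (Suc n), \<rho> n) \<in> prodg I \<Gamma>" for n
    using assms unfolding rays_antirays_def is_ray_def is_antiray_def by blast
  have c: "fst (\<rho> (Suc n)) = fst (\<rho> n) \<and> fst (\<rho> n) \<in> I" for n
    using e[of n] unfolding prodg_def by auto
  have const: "fst (\<rho> n) = fst (\<rho> 0)" for n by (induction n) (use c in auto)
  have inj: "inj (snd \<circ> \<rho>)"
  proof (rule injI)
    fix a b assume "(snd \<circ> \<rho>) a = (snd \<circ> \<rho>) b"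
    then have "\<rho> a = \<rho> b" using const[of a] const[of b] by (simp add: prod_eq_iff)
    then show "a = b" using ra_inj[OF assms] by (meson injD)
  qed
  have "is_ray (prodg I \<Gamma>) \<rho> \<or> is_antiray (prodg I \<Gamma>) \<rho>" using assms unfolding rays_antirays_def by blast
  then have "is_ray \<Gamma> (snd \<circ> \<rho>) \<or> is_antiray \<Gamma> (snd \<circ> \<rho>)"
  proof
    assume "is_ray (prodg I \<Gamma>) \<rho>"
    then have "(\<rho> k, \<rho> (Suc k)) \<in> prodg I \<Gamma>" for k unfolding is_ray_def by blast
    then have "((snd \<circ> \<rho>) k, (snd \<circ> \<rho>) (Suc k)) \<in> \<Gamma>" for k
      using prodg_edge by fastforce
    then show ?thesis using inj unfolding is_ray_def by blast
  next
    assume "is_antiray (prodg I \<Gamma>) \<rho>"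
    then have "(\<rho> (Suc k), \<rho> k) \<in> prodg I \<Gamma>" for k unfolding is_antiray_def by blast
    then have "((snd \<circ> \<rho>) (Suc k), (snd \<circ> \<rho>) k) \<in> \<Gamma>" for k
      using prodg_edge by fastforce
    then show ?thesis using inj unfolding is_antiray_def by blast
  qed
  then show ?thesis using c const unfolding rays_antirays_def by blast
qed

lemma prodg_ra_up:
  assumes "i \<in> I" "r \<in> rays_antirays \<Gamma>"
  shows "(\<lambda>n. (i, r n)) \<in> rays_antirays (prodg I \<Gamma>)"
proof -
  have inj: "inj (\<lambda>n. (i, r n))" using ra_inj[OF assms(2)] unfolding inj_def by auto
  have "is_ray \<Gamma> r \<or> is_antiray \<Gamma> r" using assms(2) unfolding rays_antirays_def by blast
  then have "is_ray (prodg I \<Gamma>) (\<lambda>n. (i, r n)) \<or> is_antiray (prodg I \<Gamma>) (\<lambda>n. (i, r n))"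
    unfolding is_ray_def is_antiray_def prodg_def using inj assms(1) by auto
  then show ?thesis unfolding rays_antirays_def by blast
qed

lemma prodg_prec:
  fixes \<Gamma> :: "'v rel" and I :: "'i set" and r s :: "nat \<Rightarrow> 'v"
  assumes "i \<in> I" "j \<in> I"
  shows "prec (prodg I \<Gamma>) (range (\<lambda>n. (i, r n))) (range (\<lambda>n. (j, s n))) \<longleftrightarrow>
    i = j \<and> prec \<Gamma> (range r) (range s)"
proof
  assume p: "prec (prodg I \<Gamma>) (range (\<lambda>n. (i, r n))) (range (\<lambda>n. (j, s n)))"
  have "\<exists>x\<in>range (\<lambda>n. (i, r n)). \<exists>y\<in>range (\<lambda>n. (j, s n)). reachF (prodg I \<Gamma>) {} x y"
    using p unfolding prec_def by blast
  then obtain a b where "reachF (prodg I \<Gamma>) {} (i, r a) (j, s b)" by blast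
  then have "((i, r a), (j, s b)) \<in> (avoid (prodg I \<Gamma>) {})\<^sup>*" unfolding reachF_def by blast
  then have ij: "i = j" using prodg_rtrancl_down by fastforce
  have "prec \<Gamma> (range r) (range s)" unfolding prec_def
  proof (intro allI impI)
    fix G :: "'v set" assume "finite G"
    then have "finite ({i} \<times> G)" by simp
    then have "\<exists>x\<in>range (\<lambda>n. (i, r n)). \<exists>y\<in>range (\<lambda>n. (j, s n)). reachF (prodg I \<Gamma>) ({i} \<times> G) x y"
      using p unfolding prec_def by blast
    then obtain a b where ab: "reachF (prodg I \<Gamma>) ({i} \<times> G) (i, r a) (j, s b)" by blast
    then have a1: "(i, r a) \<notin> {i} \<times> G" and a2: "((i, r a), (j, s b)) \<in> (avoid (prodg I \<Gamma>) ({i} \<times> G))\<^sup>*"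
      unfolding reachF_def by blast+
    have "(r a, s b) \<in> (avoid \<Gamma> {u. (i, u) \<in> {i} \<times> G})\<^sup>*"
      using prodg_rtrancl_down[OF a2] by simp
    moreover have "{u. (i, u) \<in> {i} \<times> G} = G" by blast
    moreover have "r a \<notin> G" using a1 by blast
    ultimately have "reachF \<Gamma> G (r a) (s b)" unfolding reachF_def by simp
    then show "\<exists>x\<in>range r. \<exists>y\<in>range s. reachF \<Gamma> G x y" by blast
  qed
  then show "i = j \<and> prec \<Gamma> (range r) (range s)" using ij by blast
next
  assume h: "i = j \<and> prec \<Gamma> (range r) (range s)"
  show "prec (prodg I \<Gamma>) (range (\<lambda>n. (i, r n))) (range (\<lambda>n. (j, s n)))" unfolding prec_def
  proof (intro allI impI)
    fix F :: "('i \<times> 'v) set" assume fF: "finite F"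
    have "{u. (i, u) \<in> F} = snd ` (F \<inter> ({i} \<times> UNIV))" by force
    then have "finite {u. (i, u) \<in> F}" using fF by simp
    then obtain x y where xy: "x \<in> range r" "y \<in> range s" "reachF \<Gamma> {u. (i, u) \<in> F} x y"
      using h unfolding prec_def by blast
    then have "((i, x), (i, y)) \<in> (avoid (prodg I \<Gamma>) F)\<^sup>*"
      using prodg_rtrancl_up[of x y \<Gamma> "{u. (i, u) \<in> F}" i F I] assms(1) unfolding reachF_def by blast
    moreover have "(i, x) \<notin> F" using xy(3) unfolding reachF_def by blast
    ultimately have "reachF (prodg I \<Gamma>) F (i, x) (j, y)" using h unfolding reachF_def by blast
    then show "\<exists>x\<in>range (\<lambda>n. (i, r n)). \<exists>y\<in>range (\<lambda>n. (j, s n)). reachF (prodg I \<Gamma>) F x y"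
      using xy by blast
  qed
qed

lemma prod_quot:
  fixes I :: "'i set" and A :: "'a set"
  assumes eq: "equiv A r"
  shows "(I \<times> A) // {((i, x), (j, y)). i = j \<and> i \<in> I \<and> (x, y) \<in> r} \<approx> I \<times> (A // r)"
proof -
  let ?s = "{((i, x), (j, y)). i = j \<and> i \<in> I \<and> (x, y) \<in> r}"
  have cl: "?s `` {(i, x)} = {i} \<times> r `` {x}" if "i \<in> I" for i x using that by auto
  have ne: "X \<noteq> {}" if "X \<in> A // r" for X
    using that equiv_class_self[OF eq] by (metis empty_iff quotientE)
  define g where "g p = {fst p} \<times> snd p" for p :: "'i \<times> 'a set"
  have "bij_betw g (I \<times> (A // r)) ((I \<times> A) // ?s)"
  proof (rule bij_betw_imageI)
    show "inj_on g (I \<times> (A // r))"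
    proof (rule inj_onI)
      fix p q assume p: "p \<in> I \<times> (A // r)" and q: "q \<in> I \<times> (A // r)" and e: "g p = g q"
      have "snd p \<noteq> {}" "snd q \<noteq> {}" using ne p q by auto
      then show "p = q" using e unfolding g_def by (simp add: times_eq_iff prod_eq_iff)
    qed
  next
    show "g ` (I \<times> (A // r)) = (I \<times> A) // ?s"
    proof
      show "g ` (I \<times> (A // r)) \<subseteq> (I \<times> A) // ?s"
      proof
        fix Z assume "Z \<in> g ` (I \<times> (A // r))"
        then obtain i X where iX: "i \<in> I" "X \<in> A // r" "Z = {i} \<times> X" unfolding g_def by auto
        then obtain x where x: "x \<in> A" "X = r `` {x}" by (meson quotientE)
        then have "Z = ?s `` {(i, x)}" using cl[OF iX(1)] iX(3) by simp
        moreover have "(i, x) \<in> I \<times> A" using iX(1) x(1) by simp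
        then have "?s `` {(i, x)} \<in> (I \<times> A) // ?s" by (rule quotientI)
        ultimately show "Z \<in> (I \<times> A) // ?s" by simp
      qed
    next
      show "(I \<times> A) // ?s \<subseteq> g ` (I \<times> (A // r))"
      proof
        fix Z assume "Z \<in> (I \<times> A) // ?s"
        then obtain p where p: "p \<in> I \<times> A" "Z = ?s `` {p}" by (rule quotientE)
        then obtain i x where ix: "p = (i, x)" "i \<in> I" "x \<in> A" by blast
        then have "Z = g (i, r `` {x})" using cl[OF ix(2)] p(2) unfolding g_def by simp
        moreover have "(i, r `` {x}) \<in> I \<times> (A // r)" using ix by (auto intro: quotientI)
        ultimately show "Z \<in> g ` (I \<times> (A // r))" by blast
      qed
    qed
  qed
  then show ?thesis using eqpoll_sym unfolding eqpoll_def by blast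
qed




lemma equiv_prod:
  assumes eq: "equiv A r"
  shows "equiv (I \<times> A) {((i, x), (j, y)). i = j \<and> i \<in> I \<and> (x, y) \<in> r}"
proof (rule equivI)
  show "{((i, x), (j, y)). i = j \<and> i \<in> I \<and> (x, y) \<in> r} \<subseteq> (I \<times> A) \<times> (I \<times> A)"
    using eq unfolding equiv_def by blast
  show "refl_on (I \<times> A) {((i, x), (j, y)). i = j \<and> i \<in> I \<and> (x, y) \<in> r}"
    using eq unfolding equiv_def refl_on_def by blast
  show "sym {((i, x), (j, y)). i = j \<and> i \<in> I \<and> (x, y) \<in> r}"
    using eq unfolding equiv_def sym_def by blast
  show "trans {((i, x), (j, y)). i = j \<and> i \<in> I \<and> (x, y) \<in> r}"
    using eq unfolding equiv_def trans_def by blast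
qed

theorem ends_prodg:
  fixes \<Gamma> :: "'v rel" and I :: "'i set"
  assumes n: "nice \<Gamma> K"
  shows "ends (prodg I \<Gamma>) \<approx> I \<times> ends \<Gamma>"
proof -
  let ?A = "rays_antirays (prodg I \<Gamma>)" and ?B = "I \<times> rays_antirays \<Gamma>"
  let ?s = "{((i, x), (j, y)). i = j \<and> i \<in> I \<and> (x, y) \<in> end_equiv \<Gamma>}"
  have nP: "nice (prodg I \<Gamma>) K" by (rule nice_prodg[OF n])
  define f where "f \<rho> = (fst (\<rho> 0), snd \<circ> \<rho>)" for \<rho> :: "nat \<Rightarrow> 'i \<times> 'v"
  have fB: "\<forall>x\<in>?A. f x \<in> ?B" unfolding f_def using prodg_ra by blast
  have rng: "range \<rho> = range (\<lambda>n. (fst (\<rho> 0), (snd \<circ> \<rho>) n))" if "\<rho> \<in> ?A" for \<rho>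
  proof -
    have "\<rho> = (\<lambda>n. (fst (\<rho> 0), (snd \<circ> \<rho>) n))"
      using prodg_ra[OF that] by (auto simp: prod_eq_iff)
    then show ?thesis by metis
  qed
  have resp: "\<forall>x\<in>?A. \<forall>y\<in>?A. (x, y) \<in> end_equiv (prodg I \<Gamma>) \<longleftrightarrow> (f x, f y) \<in> ?s"
  proof (intro ballI)
    fix x y assume x: "x \<in> ?A" and y: "y \<in> ?A"
    have ix: "fst (x 0) \<in> I" "snd \<circ> x \<in> rays_antirays \<Gamma>" using prodg_ra[OF x] by blast+
    have iy: "fst (y 0) \<in> I" "snd \<circ> y \<in> rays_antirays \<Gamma>" using prodg_ra[OF y] by blast+
    have "(x, y) \<in> end_equiv (prodg I \<Gamma>) \<longleftrightarrow> prec (prodg I \<Gamma>) (range x) (range y)"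
      using end_equiv_nice[OF nP] x y by blast
    also have "\<dots> \<longleftrightarrow> fst (x 0) = fst (y 0) \<and> prec \<Gamma> (range (snd \<circ> x)) (range (snd \<circ> y))"
      unfolding rng[OF x] rng[OF y] by (rule prodg_prec[OF ix(1) iy(1)])
    also have "\<dots> \<longleftrightarrow> (f x, f y) \<in> ?s"
      unfolding f_def using end_equiv_nice[OF n] ix iy by auto
    finally show "(x, y) \<in> end_equiv (prodg I \<Gamma>) \<longleftrightarrow> (f x, f y) \<in> ?s" .
  qed
  have sur: "\<forall>y\<in>?B. \<exists>x\<in>?A. (f x, y) \<in> ?s"
  proof
    fix y assume y: "y \<in> ?B"
    then obtain i r where ir: "y = (i, r)" "i \<in> I" "r \<in> rays_antirays \<Gamma>" by blast
    have "(\<lambda>n. (i, r n)) \<in> ?A" by (rule prodg_ra_up[OF ir(2) ir(3)])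
    moreover have "f (\<lambda>n. (i, r n)) = (i, r)" unfolding f_def by (simp add: comp_def)
    moreover have "(r, r) \<in> end_equiv \<Gamma>" using equiv_ends[OF n] ir(3) unfolding equiv_def refl_on_def by blast
    ultimately show "\<exists>x\<in>?A. (f x, y) \<in> ?s" using ir by force
  qed
  have "?A // end_equiv (prodg I \<Gamma>) \<approx> ?B // ?s"
    by (rule quotient_eqpoll[OF equiv_ends[OF nP] equiv_prod[OF equiv_ends[OF n]] fB resp sur])
  also have "?B // ?s \<approx> I \<times> (rays_antirays \<Gamma> // end_equiv \<Gamma>)"
    by (rule prod_quot[OF equiv_ends[OF n]])
  finally show ?thesis unfolding ends_def .
qed




definition sg_ok :: "'a set \<Rightarrow> ('a \<Rightarrow> 'a \<Rightarrow> 'a) \<Rightarrow> bool" where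
  "sg_ok S mul \<longleftrightarrow> (\<forall>x\<in>S. \<forall>y\<in>S. mul x y \<in> S) \<and>
     (\<forall>x\<in>S. \<forall>y\<in>S. \<forall>z\<in>S. mul (mul x y) z = mul x (mul y z))"

lemma right_gen_pow:
  assumes ok: "sg_ok S mul" and gen: "sg_generates S mul A" and c: "c \<in> S"
  shows "\<exists>n. \<forall>x\<in>S. (x, mul x c) \<in> (right_cayley S mul A) ^^ n"
proof -
  have AS: "A \<subseteq> S" and eq: "sg_generated mul A = S" using gen unfolding sg_generates_def by auto
  have "c \<in> sg_generated mul A" using c eq by simp
  then show ?thesis
  proof (induction rule: sg_generated.induct)
    case (gen a)
    have "(x, mul x a) \<in> (right_cayley S mul A) ^^ 1" if "x \<in> S" for x
      using that gen unfolding right_cayley_def by auto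
    then show ?case by blast
  next
    case (mul_closed y z)
    then obtain m n where m: "\<forall>x\<in>S. (x, mul x y) \<in> (right_cayley S mul A) ^^ m"
      and n: "\<forall>x\<in>S. (x, mul x z) \<in> (right_cayley S mul A) ^^ n" by blast
    have yz: "y \<in> S" "z \<in> S" using mul_closed(1,2) eq by auto
    have "(x, mul x (mul y z)) \<in> (right_cayley S mul A) ^^ (m + n)" if x: "x \<in> S" for x
    proof -
      have "mul x y \<in> S" using ok x yz unfolding sg_ok_def by blast
      then have "(mul x y, mul (mul x y) z) \<in> (right_cayley S mul A) ^^ n" using n by blast
      moreover have "mul (mul x y) z = mul x (mul y z)" using ok x yz unfolding sg_ok_def by blast
      ultimately show ?thesis using m x by (metis relpow_trans)
    qed
    then show ?case by blast
  qed
qed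

lemma left_gen_pow:
  assumes ok: "sg_ok S mul" and gen: "sg_generates S mul A" and c: "c \<in> S"
  shows "\<exists>n. \<forall>x\<in>S. (x, mul c x) \<in> (left_cayley S mul A) ^^ n"
proof -
  have AS: "A \<subseteq> S" and eq: "sg_generated mul A = S" using gen unfolding sg_generates_def by auto
  have "c \<in> sg_generated mul A" using c eq by simp
  then show ?thesis
  proof (induction rule: sg_generated.induct)
    case (gen a)
    have "(x, mul a x) \<in> (left_cayley S mul A) ^^ 1" if "x \<in> S" for x
      using that gen unfolding left_cayley_def by auto
    then show ?case by blast
  next
    case (mul_closed y z)
    then obtain m n where m: "\<forall>x\<in>S. (x, mul y x) \<in> (left_cayley S mul A) ^^ m"
      and n: "\<forall>x\<in>S. (x, mul z x) \<in> (left_cayley S mul A) ^^ n" by blast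
    have yz: "y \<in> S" "z \<in> S" using mul_closed(1,2) eq by auto
    have "(x, mul (mul y z) x) \<in> (left_cayley S mul A) ^^ (n + m)" if x: "x \<in> S" for x
    proof -
      have "mul z x \<in> S" using ok x yz unfolding sg_ok_def by blast
      then have "(mul z x, mul y (mul z x)) \<in> (left_cayley S mul A) ^^ m" using m by blast
      moreover have "mul (mul y z) x = mul y (mul z x)" using ok x yz unfolding sg_ok_def by blast
      ultimately show ?thesis using n x by (metis relpow_trans)
    qed
    then show ?case by blast
  qed
qed

lemma right_uniform:
  assumes ok: "sg_ok S mul" and gen: "sg_generates S mul A" and fin: "finite Cs" and sub: "Cs \<subseteq> S"
  shows "\<exists>N. \<forall>c\<in>Cs. \<forall>x\<in>S. near (right_cayley S mul A) N x (mul x c)"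
  using fin sub
proof (induction rule: finite_induct)
  case empty then show ?case by simp
next
  case (insert c Cs)
  then obtain N where N: "\<forall>c\<in>Cs. \<forall>x\<in>S. near (right_cayley S mul A) N x (mul x c)" by blast
  obtain n where n: "\<forall>x\<in>S. (x, mul x c) \<in> (right_cayley S mul A) ^^ n"
    using right_gen_pow[OF ok gen] insert(4) by blast
  have "\<forall>c'\<in>insert c Cs. \<forall>x\<in>S. near (right_cayley S mul A) (N + n) x (mul x c')"
  proof (intro ballI)
    fix c' x assume c': "c' \<in> insert c Cs" and x: "x \<in> S"
    show "near (right_cayley S mul A) (N + n) x (mul x c')"
    proof (cases "c' = c")
      case True then show ?thesis using n x unfolding near_def by (intro exI[of _ n]) auto
    next
      case False
      then have "near (right_cayley S mul A) N x (mul x c')" using N c' x by blast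
      then show ?thesis by (rule near_mono[rotated]) simp
    qed
  qed
  then show ?case by blast
qed

lemma left_uniform:
  assumes ok: "sg_ok S mul" and gen: "sg_generates S mul A" and fin: "finite Cs" and sub: "Cs \<subseteq> S"
  shows "\<exists>N. \<forall>c\<in>Cs. \<forall>x\<in>S. near (left_cayley S mul A) N x (mul c x)"
  using fin sub
proof (induction rule: finite_induct)
  case empty then show ?case by simp
next
  case (insert c Cs)
  then obtain N where N: "\<forall>c\<in>Cs. \<forall>x\<in>S. near (left_cayley S mul A) N x (mul c x)" by blast
  obtain n where n: "\<forall>x\<in>S. (x, mul c x) \<in> (left_cayley S mul A) ^^ n"
    using left_gen_pow[OF ok gen] insert(4) by blast
  have "\<forall>c'\<in>insert c Cs. \<forall>x\<in>S. near (left_cayley S mul A) (N + n) x (mul c' x)"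
  proof (intro ballI)
    fix c' x assume c': "c' \<in> insert c Cs" and x: "x \<in> S"
    show "near (left_cayley S mul A) (N + n) x (mul c' x)"
    proof (cases "c' = c")
      case True then show ?thesis using n x unfolding near_def by (intro exI[of _ n]) auto
    next
      case False
      then have "near (left_cayley S mul A) N x (mul c' x)" using N c' x by blast
      then show ?thesis by (rule near_mono[rotated]) simp
    qed
  qed
  then show ?case by blast
qed

lemma near_prodg: "near \<Gamma> C u v \<Longrightarrow> i \<in> I \<Longrightarrow> near (prodg I \<Gamma>) C (i, u) (i, v)"
proof -
  assume "near \<Gamma> C u v" "i \<in> I"
  then obtain n where n: "n \<le> C" "(u, v) \<in> \<Gamma> ^^ n" unfolding near_def by blast
  have "((i, u), (i, v)) \<in> (prodg I \<Gamma>) ^^ n" by (rule prodg_relpow[OF n(2) \<open>i \<in> I\<close>])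
  then show ?thesis unfolding near_def using n(1) by blast
qed

lemma right_cayley_sub: "sg_ok S mul \<Longrightarrow> A \<subseteq> S \<Longrightarrow> right_cayley S mul A \<subseteq> S \<times> S"
  unfolding right_cayley_def sg_ok_def by auto

lemma left_cayley_sub: "sg_ok S mul \<Longrightarrow> A \<subseteq> S \<Longrightarrow> left_cayley S mul A \<subseteq> S \<times> S"
  unfolding left_cayley_def sg_ok_def by auto

lemma right_cayley_out: "finite A \<Longrightarrow> finite (right_cayley S mul A `` {x})"
proof -
  assume "finite A"
  moreover have "right_cayley S mul A `` {x} \<subseteq> mul x ` A" unfolding right_cayley_def by auto
  ultimately show ?thesis using finite_surj by blast
qed

lemma left_cayley_out: "finite A \<Longrightarrow> finite (left_cayley S mul A `` {x})"
proof -
  assume "finite A"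
  moreover have "left_cayley S mul A `` {x} \<subseteq> (\<lambda>a. mul a x) ` A" unfolding left_cayley_def by auto
  ultimately show ?thesis using finite_surj by blast
qed

lemma prodg_sub: "\<Gamma> \<subseteq> V \<times> V \<Longrightarrow> prodg I \<Gamma> \<subseteq> (I \<times> V) \<times> (I \<times> V)"
  unfolding prodg_def by auto




locale rees = group G for G :: "('g, 'b) monoid_scheme" (structure) +
  fixes I :: "'i set" and L :: "'l set" and P :: "'l \<Rightarrow> 'i \<Rightarrow> 'g"
    and A :: "('i \<times> 'g \<times> 'l) set" and B :: "'g set"
  assumes P: "\<And>l i. l \<in> L \<Longrightarrow> i \<in> I \<Longrightarrow> P l i \<in> carrier G"
    and fA: "finite A" and gA: "sg_generates (rees_carrier G I L) (rees_mult G P) A"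
    and fB: "finite B" and gB: "sg_generates (carrier G) (mult G) B"
    and I0: "I \<noteq> {}" and L0: "L \<noteq> {}" and fI: "finite I" and fL: "finite L"
begin

abbreviation "S \<equiv> rees_carrier G I L"
abbreviation "mul \<equiv> rees_mult G P"
abbreviation "\<Gamma>G \<equiv> right_cayley (carrier G) (mult G) B"

definition i0 where "i0 = (SOME i. i \<in> I)"
definition l0 where "l0 = (SOME l. l \<in> L)"
lemma i0: "i0 \<in> I" unfolding i0_def using I0 by (simp add: some_in_eq)
lemma l0: "l0 \<in> L" unfolding l0_def using L0 by (simp add: some_in_eq)

lemma mul_simp: "mul (i, g, l) (j, h, m) = (i, g \<otimes> P l j \<otimes> h, m)"
  by (simp add: rees_mult_def)

lemma S_iff: "(i, g, l) \<in> S \<longleftrightarrow> i \<in> I \<and> g \<in> carrier G \<and> l \<in> L"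
  by (simp add: rees_carrier_def)

lemma AS: "A \<subseteq> S" using gA unfolding sg_generates_def by blast
lemma BG: "B \<subseteq> carrier G" using gB unfolding sg_generates_def by blast

lemma hl1: "x \<in> carrier G \<Longrightarrow> y \<in> carrier G \<Longrightarrow> x \<otimes> y \<otimes> inv y = x"
  by (simp add: m_assoc)
lemma hl2: "x \<in> carrier G \<Longrightarrow> y \<in> carrier G \<Longrightarrow> inv y \<otimes> (y \<otimes> x) = x"
  by (simp add: m_assoc[symmetric])
lemma hl3: "x \<in> carrier G \<Longrightarrow> y \<in> carrier G \<Longrightarrow> y \<otimes> (inv y \<otimes> x) = x"
  by (simp add: m_assoc[symmetric])
lemma hl4: "x \<in> carrier G \<Longrightarrow> y \<in> carrier G \<Longrightarrow> x \<otimes> inv y \<otimes> y = x"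
  by (simp add: m_assoc)

lemma okS: "sg_ok S mul"
  unfolding sg_ok_def
proof (intro conjI ballI)
  fix x y assume x: "x \<in> S" and y: "y \<in> S"
  obtain i g l where "x = (i, g, l)" by (cases x) auto
  moreover obtain j h m where "y = (j, h, m)" by (cases y) auto
  ultimately show "mul x y \<in> S" using x y P by (simp add: mul_simp S_iff)
next
  fix x y z assume x: "x \<in> S" and y: "y \<in> S" and z: "z \<in> S"
  obtain i g l where "x = (i, g, l)" by (cases x) auto
  moreover obtain j h m where "y = (j, h, m)" by (cases y) auto
  moreover obtain k q n where "z = (k, q, n)" by (cases z) auto
  ultimately show "mul (mul x y) z = mul x (mul y z)" using x y z P by (simp add: mul_simp S_iff m_assoc)
qed

lemma okG: "sg_ok (carrier G) (mult G)"
  unfolding sg_ok_def by (simp add: m_assoc)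

lemma GG_edge: "(u, v) \<in> \<Gamma>G \<Longrightarrow> \<exists>b\<in>B. u \<in> carrier G \<and> v = u \<otimes> b"
  unfolding right_cayley_def by blast

lemma niceG: "\<exists>K. nice \<Gamma>G K"
proof -
  have fin: "finite ((\<lambda>b. inv b) ` B)" using fB by simp
  have sub: "(\<lambda>b. inv b) ` B \<subseteq> carrier G" using BG by auto
  obtain N where N: "\<forall>c\<in>(\<lambda>b. inv b) ` B. \<forall>x\<in>carrier G. near \<Gamma>G N x (x \<otimes> c)"
    using right_uniform[OF okG gB fin sub] by blast
  have out: "\<forall>u. finite (\<Gamma>G `` {u})" using right_cayley_out[OF fB] by blast
  have inn: "finite (\<Gamma>G\<inverse> `` {y})" for y
  proof -
    have "\<Gamma>G\<inverse> `` {y} \<subseteq> (\<lambda>b. y \<otimes> inv b) ` B"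
    proof
      fix x assume "x \<in> \<Gamma>G\<inverse> `` {y}"
      then have "(x, y) \<in> \<Gamma>G" by blast
      then obtain b where b: "b \<in> B" "x \<in> carrier G" "y = x \<otimes> b" using GG_edge by blast
      then have "x = y \<otimes> inv b" using BG hl1 by auto
      then show "x \<in> (\<lambda>b. y \<otimes> inv b) ` B" using b(1) by blast
    qed
    then show ?thesis using fB finite_surj by blast
  qed
  have rev: "near \<Gamma>G N v u" if e: "(u, v) \<in> \<Gamma>G" for u v
  proof -
    obtain b where b: "b \<in> B" "u \<in> carrier G" "v = u \<otimes> b" using GG_edge[OF e] by blast
    have "v \<in> carrier G" using b BG by auto
    then have "near \<Gamma>G N v (v \<otimes> inv b)" using N b(1) by blast
    moreover have "v \<otimes> inv b = u" using b BG hl1 by auto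
    ultimately show ?thesis by simp
  qed
  show ?thesis unfolding nice_def using out inn rev by blast
qed

end




context rees
begin

abbreviation "\<Gamma>R \<equiv> right_cayley S mul A"

lemma R_edge: "(x, y) \<in> \<Gamma>R \<Longrightarrow> \<exists>i g l j h m. x = (i, g, l) \<and> (j, h, m) \<in> A \<and> y = (i, g \<otimes> P l j \<otimes> h, m)
   \<and> i \<in> I \<and> g \<in> carrier G \<and> l \<in> L \<and> j \<in> I \<and> h \<in> carrier G \<and> m \<in> L"
proof -
  assume "(x, y) \<in> \<Gamma>R"
  then obtain a where a: "x \<in> S" "a \<in> A" "y = mul x a" unfolding right_cayley_def by blast
  obtain i g l where x: "x = (i, g, l)" by (cases x) auto
  obtain j h m where aa: "a = (j, h, m)" by (cases a) auto
  have "a \<in> S" using a(2) AS by blast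
  then show ?thesis using a x aa by (auto simp: mul_simp S_iff)
qed

lemma finLA: "finite (L \<times> A)" using fA fL by simp

lemma niceR: "\<exists>K. nice \<Gamma>R K"
proof -
  define s where "s p = (i0, inv (P (fst p) (fst (snd p)) \<otimes> fst (snd (snd p)) \<otimes> P (snd (snd (snd p))) i0), fst p)"
    for p :: "'l \<times> 'i \<times> 'g \<times> 'l"
  have fin: "finite (s ` (L \<times> A))" using finLA by simp
  have sub: "s ` (L \<times> A) \<subseteq> S"
  proof
    fix z assume "z \<in> s ` (L \<times> A)"
    then obtain l j h m where ljhm: "l \<in> L" "(j, h, m) \<in> A" "z = s (l, j, h, m)" by auto
    moreover have "(j, h, m) \<in> S" using ljhm(2) AS by blast
    ultimately show "z \<in> S" using P i0 unfolding s_def by (simp add: S_iff)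
  qed
  obtain N where N: "\<forall>c\<in>s ` (L \<times> A). \<forall>x\<in>S. near \<Gamma>R N x (mul x c)"
    using right_uniform[OF okS gA fin sub] by blast
  have out: "\<forall>u. finite (\<Gamma>R `` {u})" using right_cayley_out[OF fA] by blast
  have inn: "finite (\<Gamma>R\<inverse> `` {y})" for y
  proof -
    obtain i' y' m' where y: "y = (i', y', m')" by (cases y) auto
    have "\<Gamma>R\<inverse> `` {y} \<subseteq> (\<lambda>p. (i', y' \<otimes> inv (P (fst p) (fst (snd p)) \<otimes> fst (snd (snd p))), fst p)) ` (L \<times> A)"
    proof
      fix x assume "x \<in> \<Gamma>R\<inverse> `` {y}"
      then have "(x, y) \<in> \<Gamma>R" by blast
      then obtain i g l j h m where e: "x = (i, g, l)" "(j, h, m) \<in> A" "y = (i, g \<otimes> P l j \<otimes> h, m)"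
        "i \<in> I" "g \<in> carrier G" "l \<in> L" "j \<in> I" "h \<in> carrier G" "m \<in> L" using R_edge by blast
      have "g \<otimes> P l j \<otimes> h \<otimes> inv (P l j \<otimes> h) = g"
        using e P by (simp add: m_assoc)
      then have "x = (i', y' \<otimes> inv (P l j \<otimes> h), l)" using e y by simp
      then show "x \<in> (\<lambda>p. (i', y' \<otimes> inv (P (fst p) (fst (snd p)) \<otimes> fst (snd (snd p))), fst p)) ` (L \<times> A)"
        using e(2) e(6) by force
    qed
    then show ?thesis using finLA finite_surj by blast
  qed
  have rev: "near \<Gamma>R N y x" if e0: "(x, y) \<in> \<Gamma>R" for x y
  proof -
    obtain i g l j h m where e: "x = (i, g, l)" "(j, h, m) \<in> A" "y = (i, g \<otimes> P l j \<otimes> h, m)"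
      "i \<in> I" "g \<in> carrier G" "l \<in> L" "j \<in> I" "h \<in> carrier G" "m \<in> L" using R_edge[OF e0] by blast
    have yS: "y \<in> S" using e P by (simp add: S_iff)
    have "s (l, j, h, m) \<in> s ` (L \<times> A)" using e(2,6) by blast
    then have "near \<Gamma>R N y (mul y (s (l, j, h, m)))" using N yS by blast
    moreover have "mul y (s (l, j, h, m)) = x"
    proof -
      have c: "P l j \<otimes> h \<otimes> P m i0 \<in> carrier G" using e P i0 by simp
      have "g \<otimes> P l j \<otimes> h \<otimes> P m i0 \<otimes> inv (P l j \<otimes> h \<otimes> P m i0) =
            g \<otimes> (P l j \<otimes> h \<otimes> P m i0) \<otimes> inv (P l j \<otimes> h \<otimes> P m i0)"
        using e P i0 by (simp add: m_assoc)
      also have "\<dots> = g" using hl1[OF e(5) c] .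
      finally show ?thesis using e unfolding s_def by (simp add: mul_simp)
    qed
    ultimately show ?thesis by simp
  qed
  show ?thesis unfolding nice_def using out inn rev by blast
qed

end




context rees
begin

lemma right_result: "ends_antichain \<Gamma>R \<and> ends \<Gamma>R \<approx> I \<times> ends \<Gamma>G"
proof -
  obtain KR where nR: "nice \<Gamma>R KR" using niceR by blast
  obtain KG where nG: "nice \<Gamma>G KG" using niceG by blast
  have nP: "nice (prodg I \<Gamma>G) KG" by (rule nice_prodg[OF nG])
  define \<phi> where "\<phi> x = (fst x, fst (snd x))" for x :: "'i \<times> 'g \<times> 'l"
  define \<psi> where "\<psi> y = (fst y, snd y, l0)" for y :: "'i \<times> 'g"
  define c1 where "c1 p = P (fst p) (fst (snd p)) \<otimes> fst (snd (snd p))" for p :: "'l \<times> 'i \<times> 'g \<times> 'l"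
  have fc1: "finite (c1 ` (L \<times> A))" using finLA by simp
  have sc1: "c1 ` (L \<times> A) \<subseteq> carrier G"
  proof
    fix z assume "z \<in> c1 ` (L \<times> A)"
    then obtain l j h m where ljhm: "l \<in> L" "(j, h, m) \<in> A" "z = c1 (l, j, h, m)" by auto
    moreover have "(j, h, m) \<in> S" using ljhm(2) AS by blast
    ultimately show "z \<in> carrier G" using P unfolding c1_def by (simp add: S_iff)
  qed
  obtain N1 where N1: "\<forall>c\<in>c1 ` (L \<times> A). \<forall>x\<in>carrier G. near \<Gamma>G N1 x (x \<otimes> c)"
    using right_uniform[OF okG gB fc1 sc1] by blast
  define c2 where "c2 b = (i0, inv (P l0 i0) \<otimes> b, l0)" for b
  have fc2: "finite (c2 ` B)" using fB by simp
  have sc2: "c2 ` B \<subseteq> S" using BG P i0 l0 unfolding c2_def by (auto simp: S_iff)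
  obtain N2 where N2: "\<forall>c\<in>c2 ` B. \<forall>x\<in>S. near \<Gamma>R N2 x (mul x c)"
    using right_uniform[OF okS gA fc2 sc2] by blast
  define c3 where "c3 l = (i0, inv (P l i0), l0)" for l
  have fc3: "finite (c3 ` L)" using fL by simp
  have sc3: "c3 ` L \<subseteq> S" using P i0 l0 unfolding c3_def by (auto simp: S_iff)
  obtain N3 where N3: "\<forall>c\<in>c3 ` L. \<forall>x\<in>S. near \<Gamma>R N3 x (mul x c)"
    using right_uniform[OF okS gA fc3 sc3] by blast
  define C where "C = N1 + N2 + N3"
  have subR: "\<Gamma>R \<subseteq> S \<times> S" by (rule right_cayley_sub[OF okS AS])
  have subP: "prodg I \<Gamma>G \<subseteq> (I \<times> carrier G) \<times> (I \<times> carrier G)"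
    by (rule prodg_sub[OF right_cayley_sub[OF okG BG]])
  have co1: "coarse S \<Gamma>R (prodg I \<Gamma>G) C \<phi>"
    unfolding coarse_def
  proof (intro conjI allI impI)
    show "\<Gamma>R \<subseteq> S \<times> S" by (rule subR)
  next
    fix u show "finite ((prodg I \<Gamma>G)\<inverse> `` {u})" using nP unfolding nice_def by blast
  next
    fix x y assume e0: "(x, y) \<in> \<Gamma>R"
    obtain i g l j h m where e: "x = (i, g, l)" "(j, h, m) \<in> A" "y = (i, g \<otimes> P l j \<otimes> h, m)"
      "i \<in> I" "g \<in> carrier G" "l \<in> L" "j \<in> I" "h \<in> carrier G" "m \<in> L" using R_edge[OF e0] by blast
    have "c1 (l, j, h, m) \<in> c1 ` (L \<times> A)" using e(2,6) by blast
    then have "near \<Gamma>G N1 g (g \<otimes> c1 (l, j, h, m))" using N1 e(5) by blast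
    moreover have "g \<otimes> c1 (l, j, h, m) = g \<otimes> P l j \<otimes> h" using e P unfolding c1_def by (simp add: m_assoc)
    ultimately have "near \<Gamma>G N1 g (g \<otimes> P l j \<otimes> h)" by (simp only:)
    then have "near (prodg I \<Gamma>G) N1 (i, g) (i, g \<otimes> P l j \<otimes> h)" using e(4) by (rule near_prodg)
    then have "near (prodg I \<Gamma>G) C (i, g) (i, g \<otimes> P l j \<otimes> h)" by (rule near_mono[rotated]) (simp add: C_def)
    then show "near (prodg I \<Gamma>G) C (\<phi> x) (\<phi> y)" using e unfolding \<phi>_def by simp
  next
    fix w :: "'i \<times> 'g"
    have "{u \<in> S. \<phi> u = w} \<subseteq> (\<lambda>l. (fst w, snd w, l)) ` L" unfolding \<phi>_def rees_carrier_def by auto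
    then show "finite {u \<in> S. \<phi> u = w}" using fL finite_surj by blast
  qed
  have co2: "coarse (I \<times> carrier G) (prodg I \<Gamma>G) \<Gamma>R C \<psi>"
    unfolding coarse_def
  proof (intro conjI allI impI)
    show "prodg I \<Gamma>G \<subseteq> (I \<times> carrier G) \<times> (I \<times> carrier G)" by (rule subP)
  next
    fix u show "finite (\<Gamma>R\<inverse> `` {u})" using nR unfolding nice_def by blast
  next
    fix x y assume e0: "(x, y) \<in> prodg I \<Gamma>G"
    then have e1: "(snd x, snd y) \<in> \<Gamma>G" "fst x = fst y" "fst x \<in> I" using prodg_edge[OF e0] by blast+
    then obtain b where b: "b \<in> B" "snd x \<in> carrier G" "snd y = snd x \<otimes> b" using GG_edge[OF e1(1)] by blast
    have bG: "b \<in> carrier G" using b(1) BG by blast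
    have xS: "\<psi> x \<in> S" using e1 b l0 unfolding \<psi>_def by (simp add: S_iff)
    have "c2 b \<in> c2 ` B" using b(1) by blast
    then have "near \<Gamma>R N2 (\<psi> x) (mul (\<psi> x) (c2 b))" using N2 xS by blast
    moreover have "mul (\<psi> x) (c2 b) = \<psi> y"
      using e1 b bG P l0 i0 unfolding \<psi>_def c2_def by (simp add: mul_simp m_assoc hl3)
    ultimately have "near \<Gamma>R N2 (\<psi> x) (\<psi> y)" by (simp only:)
    then show "near \<Gamma>R C (\<psi> x) (\<psi> y)" by (rule near_mono[rotated]) (simp add: C_def)
  next
    fix w :: "'i \<times> 'g \<times> 'l"
    have "{u \<in> I \<times> carrier G. \<psi> u = w} \<subseteq> {(fst w, fst (snd w))}" unfolding \<psi>_def by auto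
    then show "finite {u \<in> I \<times> carrier G. \<psi> u = w}" using finite_subset by blast
  qed
  have \<phi>V: "\<forall>x\<in>S. \<phi> x \<in> I \<times> carrier G" unfolding \<phi>_def rees_carrier_def by auto
  have \<psi>V: "\<forall>y\<in>I \<times> carrier G. \<psi> y \<in> S" unfolding \<psi>_def using l0 by (auto simp: rees_carrier_def)
  have cl1: "\<forall>x\<in>S. near \<Gamma>R C x (\<psi> (\<phi> x))"
  proof
    fix x assume xS: "x \<in> S"
    obtain i g l where x: "x = (i, g, l)" by (cases x) auto
    then have igl: "i \<in> I" "g \<in> carrier G" "l \<in> L" using xS by (auto simp: S_iff)
    have "c3 l \<in> c3 ` L" using igl by blast
    then have "near \<Gamma>R N3 x (mul x (c3 l))" using N3 xS by blast
    moreover have "mul x (c3 l) = \<psi> (\<phi> x)"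
      using x igl P i0 unfolding \<psi>_def \<phi>_def c3_def by (simp add: mul_simp hl1)
    ultimately have "near \<Gamma>R N3 x (\<psi> (\<phi> x))" by (simp only:)
    then show "near \<Gamma>R C x (\<psi> (\<phi> x))" by (rule near_mono[rotated]) (simp add: C_def)
  qed
  have cl2: "\<forall>y\<in>I \<times> carrier G. near (prodg I \<Gamma>G) C y (\<phi> (\<psi> y))"
    unfolding \<phi>_def \<psi>_def by (simp add: near_refl)
  have "ends \<Gamma>R \<approx> ends (prodg I \<Gamma>G)"
    by (rule ends_transfer[OF nR nP co1 co2 \<phi>V \<psi>V cl1 cl2])
  also have "ends (prodg I \<Gamma>G) \<approx> I \<times> ends \<Gamma>G" by (rule ends_prodg[OF nG])
  finally show ?thesis using ends_antichain_nice[OF nR] by blast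
qed

end




context rees
begin

abbreviation "\<Gamma>Lc \<equiv> left_cayley S mul A"

lemma L_edge: "(x, y) \<in> \<Gamma>Lc \<Longrightarrow> \<exists>i g l j h m. x = (i, g, l) \<and> (j, h, m) \<in> A \<and> y = (j, h \<otimes> P m i \<otimes> g, l)
   \<and> i \<in> I \<and> g \<in> carrier G \<and> l \<in> L \<and> j \<in> I \<and> h \<in> carrier G \<and> m \<in> L"
proof -
  assume "(x, y) \<in> \<Gamma>Lc"
  then obtain a where a: "x \<in> S" "a \<in> A" "y = mul a x" unfolding left_cayley_def by blast
  obtain i g l where x: "x = (i, g, l)" by (cases x) auto
  obtain j h m where aa: "a = (j, h, m)" by (cases a) auto
  have "a \<in> S" using a(2) AS by blast
  then show ?thesis using a x aa by (auto simp: mul_simp S_iff)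
qed

lemma finIA: "finite (I \<times> A)" using fA fI by simp

lemma niceL: "\<exists>K. nice \<Gamma>Lc K"
proof -
  define s where "s p = (fst p, inv (P l0 (fst (snd p)) \<otimes> fst (snd (snd p)) \<otimes> P (snd (snd (snd p))) (fst p)), l0)"
    for p :: "'i \<times> 'i \<times> 'g \<times> 'l"
  have fin: "finite (s ` (I \<times> A))" using finIA by simp
  have sub: "s ` (I \<times> A) \<subseteq> S"
  proof
    fix z assume "z \<in> s ` (I \<times> A)"
    then obtain i j h m where ijhm: "i \<in> I" "(j, h, m) \<in> A" "z = s (i, j, h, m)" by auto
    moreover have "(j, h, m) \<in> S" using ijhm(2) AS by blast
    ultimately show "z \<in> S" using P l0 unfolding s_def by (simp add: S_iff)
  qed
  obtain N where N: "\<forall>c\<in>s ` (I \<times> A). \<forall>x\<in>S. near \<Gamma>Lc N x (mul c x)"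
    using left_uniform[OF okS gA fin sub] by blast
  have out: "\<forall>u. finite (\<Gamma>Lc `` {u})" using left_cayley_out[OF fA] by blast
  have inn: "finite (\<Gamma>Lc\<inverse> `` {y})" for y
  proof -
    obtain j' y' l' where y: "y = (j', y', l')" by (cases y) auto
    have "\<Gamma>Lc\<inverse> `` {y} \<subseteq> (\<lambda>p. (fst p, inv (fst (snd (snd p)) \<otimes> P (snd (snd (snd p))) (fst p)) \<otimes> y', l')) ` (I \<times> A)"
    proof
      fix x assume "x \<in> \<Gamma>Lc\<inverse> `` {y}"
      then have "(x, y) \<in> \<Gamma>Lc" by blast
      then obtain i g l j h m where e: "x = (i, g, l)" "(j, h, m) \<in> A" "y = (j, h \<otimes> P m i \<otimes> g, l)"
        "i \<in> I" "g \<in> carrier G" "l \<in> L" "j \<in> I" "h \<in> carrier G" "m \<in> L" using L_edge by blast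
      have c: "h \<otimes> P m i \<in> carrier G" using e P by simp
      have "inv (h \<otimes> P m i) \<otimes> (h \<otimes> P m i \<otimes> g) = g" using hl2[OF e(5) c] .
      then have "x = (i, inv (h \<otimes> P m i) \<otimes> y', l')" using e y by simp
      then show "x \<in> (\<lambda>p. (fst p, inv (fst (snd (snd p)) \<otimes> P (snd (snd (snd p))) (fst p)) \<otimes> y', l')) ` (I \<times> A)"
        using e(2) e(4) by force
    qed
    then show ?thesis using finIA finite_surj by blast
  qed
  have rev: "near \<Gamma>Lc N y x" if e0: "(x, y) \<in> \<Gamma>Lc" for x y
  proof -
    obtain i g l j h m where e: "x = (i, g, l)" "(j, h, m) \<in> A" "y = (j, h \<otimes> P m i \<otimes> g, l)"
      "i \<in> I" "g \<in> carrier G" "l \<in> L" "j \<in> I" "h \<in> carrier G" "m \<in> L" using L_edge[OF e0] by blast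
    have yS: "y \<in> S" using e P by (simp add: S_iff)
    have "s (i, j, h, m) \<in> s ` (I \<times> A)" using e(2,4) by blast
    then have "near \<Gamma>Lc N y (mul (s (i, j, h, m)) y)" using N yS by blast
    moreover have "mul (s (i, j, h, m)) y = x"
    proof -
      have c: "P l0 j \<otimes> h \<otimes> P m i \<in> carrier G" using e P l0 by simp
      have "inv (P l0 j \<otimes> h \<otimes> P m i) \<otimes> P l0 j \<otimes> (h \<otimes> P m i \<otimes> g) =
            inv (P l0 j \<otimes> h \<otimes> P m i) \<otimes> (P l0 j \<otimes> h \<otimes> P m i \<otimes> g)"
        using e P l0 by (simp add: m_assoc)
      also have "\<dots> = g" using hl2[OF e(5) c] .
      finally show ?thesis using e unfolding s_def by (simp add: mul_simp)
    qed
    ultimately show ?thesis by (simp only:)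
  qed
  show ?thesis unfolding nice_def using out inn rev by blast
qed

lemma left_result: "ends_antichain \<Gamma>Lc \<and> ends \<Gamma>Lc \<approx> L \<times> ends \<Gamma>G"
proof -
  obtain KR where nR: "nice \<Gamma>Lc KR" using niceL by blast
  obtain KG where nG: "nice \<Gamma>G KG" using niceG by blast
  have nP: "nice (prodg L \<Gamma>G) KG" by (rule nice_prodg[OF nG])
  define \<phi> where "\<phi> x = (snd (snd x), inv (fst (snd x)))" for x :: "'i \<times> 'g \<times> 'l"
  define \<psi> where "\<psi> y = (i0, inv (snd y), fst y)" for y :: "'l \<times> 'g"
  define c1 where "c1 p = inv (fst (snd (snd p)) \<otimes> P (snd (snd (snd p))) (fst p))" for p :: "'i \<times> 'i \<times> 'g \<times> 'l"
  have fc1: "finite (c1 ` (I \<times> A))" using finIA by simp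
  have sc1: "c1 ` (I \<times> A) \<subseteq> carrier G"
  proof
    fix z assume "z \<in> c1 ` (I \<times> A)"
    then obtain i j h m where ijhm: "i \<in> I" "(j, h, m) \<in> A" "z = c1 (i, j, h, m)" by auto
    moreover have "(j, h, m) \<in> S" using ijhm(2) AS by blast
    ultimately show "z \<in> carrier G" using P unfolding c1_def by (simp add: S_iff)
  qed
  obtain N1 where N1: "\<forall>c\<in>c1 ` (I \<times> A). \<forall>x\<in>carrier G. near \<Gamma>G N1 x (x \<otimes> c)"
    using right_uniform[OF okG gB fc1 sc1] by blast
  define c2 where "c2 b = (i0, inv b \<otimes> inv (P l0 i0), l0)" for b
  have fc2: "finite (c2 ` B)" using fB by simp
  have sc2: "c2 ` B \<subseteq> S" using BG P i0 l0 unfolding c2_def by (auto simp: S_iff)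
  obtain N2 where N2: "\<forall>c\<in>c2 ` B. \<forall>x\<in>S. near \<Gamma>Lc N2 x (mul c x)"
    using left_uniform[OF okS gA fc2 sc2] by blast
  define c3 where "c3 i = (i0, inv (P l0 i), l0)" for i
  have fc3: "finite (c3 ` I)" using fI by simp
  have sc3: "c3 ` I \<subseteq> S" using P i0 l0 unfolding c3_def by (auto simp: S_iff)
  obtain N3 where N3: "\<forall>c\<in>c3 ` I. \<forall>x\<in>S. near \<Gamma>Lc N3 x (mul c x)"
    using left_uniform[OF okS gA fc3 sc3] by blast
  define C where "C = N1 + N2 + N3"
  have subR: "\<Gamma>Lc \<subseteq> S \<times> S" by (rule left_cayley_sub[OF okS AS])
  have subP: "prodg L \<Gamma>G \<subseteq> (L \<times> carrier G) \<times> (L \<times> carrier G)"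
    by (rule prodg_sub[OF right_cayley_sub[OF okG BG]])
  have co1: "coarse S \<Gamma>Lc (prodg L \<Gamma>G) C \<phi>"
    unfolding coarse_def
  proof (intro conjI allI impI)
    show "\<Gamma>Lc \<subseteq> S \<times> S" by (rule subR)
  next
    fix u show "finite ((prodg L \<Gamma>G)\<inverse> `` {u})" using nP unfolding nice_def by blast
  next
    fix x y assume e0: "(x, y) \<in> \<Gamma>Lc"
    obtain i g l j h m where e: "x = (i, g, l)" "(j, h, m) \<in> A" "y = (j, h \<otimes> P m i \<otimes> g, l)"
      "i \<in> I" "g \<in> carrier G" "l \<in> L" "j \<in> I" "h \<in> carrier G" "m \<in> L" using L_edge[OF e0] by blast
    have "c1 (i, j, h, m) \<in> c1 ` (I \<times> A)" using e(2,4) by blast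
    moreover have "inv g \<in> carrier G" using e(5) by simp
    ultimately have "near \<Gamma>G N1 (inv g) (inv g \<otimes> c1 (i, j, h, m))" using N1 by blast
    moreover have "inv g \<otimes> c1 (i, j, h, m) = inv (h \<otimes> P m i \<otimes> g)"
      using e P unfolding c1_def by (simp add: inv_mult_group)
    ultimately have "near \<Gamma>G N1 (inv g) (inv (h \<otimes> P m i \<otimes> g))" by (simp only:)
    then have "near (prodg L \<Gamma>G) N1 (l, inv g) (l, inv (h \<otimes> P m i \<otimes> g))" using e(6) by (rule near_prodg)
    then have "near (prodg L \<Gamma>G) C (l, inv g) (l, inv (h \<otimes> P m i \<otimes> g))"
      by (rule near_mono[rotated]) (simp add: C_def)
    then show "near (prodg L \<Gamma>G) C (\<phi> x) (\<phi> y)" using e unfolding \<phi>_def by simp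
  next
    fix w :: "'l \<times> 'g"
    have "{u \<in> S. \<phi> u = w} \<subseteq> (\<lambda>i. (i, inv (snd w), fst w)) ` I"
    proof
      fix u assume u: "u \<in> {u \<in> S. \<phi> u = w}"
      obtain i g l where uu: "u = (i, g, l)" by (cases u) auto
      then have "i \<in> I" "g \<in> carrier G" using u by (auto simp: S_iff)
      moreover have "w = (l, inv g)" using u uu unfolding \<phi>_def by auto
      ultimately show "u \<in> (\<lambda>i. (i, inv (snd w), fst w)) ` I" using uu by auto
    qed
    then show "finite {u \<in> S. \<phi> u = w}" using fI finite_surj by blast
  qed
  have co2: "coarse (L \<times> carrier G) (prodg L \<Gamma>G) \<Gamma>Lc C \<psi>"
    unfolding coarse_def
  proof (intro conjI allI impI)
    show "prodg L \<Gamma>G \<subseteq> (L \<times> carrier G) \<times> (L \<times> carrier G)" by (rule subP)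
  next
    fix u show "finite (\<Gamma>Lc\<inverse> `` {u})" using nR unfolding nice_def by blast
  next
    fix x y assume e0: "(x, y) \<in> prodg L \<Gamma>G"
    then have e1: "(snd x, snd y) \<in> \<Gamma>G" "fst x = fst y" "fst x \<in> L" using prodg_edge[OF e0] by blast+
    then obtain b where b: "b \<in> B" "snd x \<in> carrier G" "snd y = snd x \<otimes> b" using GG_edge[OF e1(1)] by blast
    have bG: "b \<in> carrier G" using b(1) BG by blast
    have xS: "\<psi> x \<in> S" using e1 b i0 unfolding \<psi>_def by (simp add: S_iff)
    have "c2 b \<in> c2 ` B" using b(1) by blast
    then have "near \<Gamma>Lc N2 (\<psi> x) (mul (c2 b) (\<psi> x))" using N2 xS by blast
    moreover have "mul (c2 b) (\<psi> x) = \<psi> y"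
      using e1 b bG P l0 i0 unfolding \<psi>_def c2_def by (simp add: mul_simp hl4 inv_mult_group)
    ultimately have "near \<Gamma>Lc N2 (\<psi> x) (\<psi> y)" by (simp only:)
    then show "near \<Gamma>Lc C (\<psi> x) (\<psi> y)" by (rule near_mono[rotated]) (simp add: C_def)
  next
    fix w :: "'i \<times> 'g \<times> 'l"
    have "{u \<in> L \<times> carrier G. \<psi> u = w} \<subseteq> {(snd (snd w), inv (fst (snd w)))}" unfolding \<psi>_def by auto
    then show "finite {u \<in> L \<times> carrier G. \<psi> u = w}" using finite_subset by blast
  qed
  have \<phi>V: "\<forall>x\<in>S. \<phi> x \<in> L \<times> carrier G" unfolding \<phi>_def rees_carrier_def by auto
  have \<psi>V: "\<forall>y\<in>L \<times> carrier G. \<psi> y \<in> S" unfolding \<psi>_def using i0 by (auto simp: rees_carrier_def)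
  have cl1: "\<forall>x\<in>S. near \<Gamma>Lc C x (\<psi> (\<phi> x))"
  proof
    fix x assume xS: "x \<in> S"
    obtain i g l where x: "x = (i, g, l)" by (cases x) auto
    then have igl: "i \<in> I" "g \<in> carrier G" "l \<in> L" using xS by (auto simp: S_iff)
    have "c3 i \<in> c3 ` I" using igl by blast
    then have "near \<Gamma>Lc N3 x (mul (c3 i) x)" using N3 xS by blast
    moreover have "mul (c3 i) x = \<psi> (\<phi> x)"
      using x igl P l0 unfolding \<psi>_def \<phi>_def c3_def by (simp add: mul_simp)
    ultimately have "near \<Gamma>Lc N3 x (\<psi> (\<phi> x))" by (simp only:)
    then show "near \<Gamma>Lc C x (\<psi> (\<phi> x))" by (rule near_mono[rotated]) (simp add: C_def)
  qed
  have cl2: "\<forall>y\<in>L \<times> carrier G. near (prodg L \<Gamma>G) C y (\<phi> (\<psi> y))"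
    unfolding \<phi>_def \<psi>_def by (simp add: near_refl)
  have "ends \<Gamma>Lc \<approx> ends (prodg L \<Gamma>G)"
    by (rule ends_transfer[OF nR nP co1 co2 \<phi>V \<psi>V cl1 cl2])
  also have "ends (prodg L \<Gamma>G) \<approx> L \<times> ends \<Gamma>G" by (rule ends_prodg[OF nG])
  finally show ?thesis using ends_antichain_nice[OF nR] by blast
qed

end



theorem mainTheorem18:
  fixes G :: "('g, 'b) monoid_scheme"
    and I :: "'i set" and L :: "'l set"
    and P :: "'l \<Rightarrow> 'i \<Rightarrow> 'g"
  assumes "group G"
    and "\<exists>B. finite B \<and> B \<subseteq> carrier G \<and> generate G B = carrier G"
    and "finite I" and "I \<noteq> {}"
    and "finite L" and "L \<noteq> {}"
    and "\<And>l i. l \<in> L \<Longrightarrow> i \<in> I \<Longrightarrow> P l i \<in> carrier G"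
  shows "\<forall>A B. finite A \<and> sg_generates (rees_carrier G I L) (rees_mult G P) A
           \<and> finite B \<and> sg_generates (carrier G) (\<otimes>\<^bsub>G\<^esub>) B \<longrightarrow>
           ends_antichain (right_cayley (rees_carrier G I L) (rees_mult G P) A)
         \<and> ends (right_cayley (rees_carrier G I L) (rees_mult G P) A)
             \<approx> I \<times> ends (right_cayley (carrier G) (\<otimes>\<^bsub>G\<^esub>) B)
         \<and> ends_antichain (left_cayley (rees_carrier G I L) (rees_mult G P) A)
         \<and> ends (left_cayley (rees_carrier G I L) (rees_mult G P) A)
             \<approx> L \<times> ends (right_cayley (carrier G) (\<otimes>\<^bsub>G\<^esub>) B)"
proof (intro allI impI)
  fix A B
  assume h: "finite A \<and> sg_generates (rees_carrier G I L) (rees_mult G P) A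
           \<and> finite B \<and> sg_generates (carrier G) (\<otimes>\<^bsub>G\<^esub>) B"
  have "rees G I L P A B"
  proof (intro rees.intro rees_axioms.intro)
    show "group G" by (rule assms(1))
  qed (use assms h in auto)
  then interpret R: rees G I L P A B .
  show "ends_antichain (right_cayley (rees_carrier G I L) (rees_mult G P) A)
         \<and> ends (right_cayley (rees_carrier G I L) (rees_mult G P) A)
             \<approx> I \<times> ends (right_cayley (carrier G) (\<otimes>\<^bsub>G\<^esub>) B)
         \<and> ends_antichain (left_cayley (rees_carrier G I L) (rees_mult G P) A)
         \<and> ends (left_cayley (rees_carrier G I L) (rees_mult G P) A)
             \<approx> L \<times> ends (right_cayley (carrier G) (\<otimes>\<^bsub>G\<^esub>) B)"
    using R.right_result R.left_result by blast
qed

end
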